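(* No vertex cover-based algorithm has competitive ratio better than $\frac32$ for the hypergraph orientation problem: for every $\eta>0$ there is an instance on which every vertex cover-based algorithm $A$ has $\mathbb E[A]\ge(\frac32-\eta)\mathbb E[\mathrm{OPT}]$. This holds even within each of the following classes of instances: (1) instances with a single hyperedge (with non-uniform query costs); (2) instances with uniform query costs whose vertex cover instance $\bar G$ is bipartite; (3) graph orientation instances with uniform query costs whose graph is not bipartite.
   Context: An instance of the hypergraph orientation problem consists of a hypergraph $H=(V,E)$ and, for each vertex $v\in V$, a query cost $c_v\ge 0$ and a continuous probability distribution $d_v$; $I_v=(\ell_v,r_v)$ is the minimal open interval containing its support. The weights $w_v\sim d_v$ are drawn independently; querying $v$ reveals $w_v$ at cost $c_v$. For a realization, $Q\subseteq V$ is a feasible query set if knowing $w_u$ for $u\in Q$ and only the intervals $I_u$ for $u\notin Q$ suffices to identify a minimum-weight vertex of every hyperedge; $\mathrm{OPT}(R)$ is the minimum cost of a feasible query set for realization $R$, and $\mathbb E[\mathrm{OPT}]$ its expectation; $\mathbb E[A]$ is the expected query cost of algorithm $A$. Uniform query costs means $c_v=1$ for all $v$; the graph orientation problem is the case where all hyperedges have two vertices. The leftmost vertex of a hyperedge is one with minimum $\ell_v$. The vertex cover instance of $H$ is the graph $\bar G=(V,\bar E)$ where $\{v,u\}\in\bar E$ iff some hyperedge $F$ contains both $u,v$, $v$ is leftmost in $F$, and $I_v\cap I_u\ne\emptyset$. A vertex cover-based algorithm (1) first non-adaptively queries some vertex cover $VC$ of $\bar G$, and then (2) for each hyperedge whose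 minimum-weight vertex is not yet known, queries its unqueried vertices in order of non-decreasing left endpoints until the minimum-weight vertex of the hyperedge is known. *)

theory Defs
  imports "HOL-Probability.Probability"
begin

(* Instances: vertices are natural numbers; V finite vertex set, E set of hyperedges,
   c query costs, d v the distribution (a measure on the reals) of the weight of v. *)

definition lo :: "(nat \<Rightarrow> real measure) \<Rightarrow> nat \<Rightarrow> real" where
  "lo d v = Sup {a. measure (d v) {..a} = 0}"

definition hi :: "(nat \<Rightarrow> real measure) \<Rightarrow> nat \<Rightarrow> real" where
  "hi d v = Inf {b. measure (d v) {b..} = 0}"

definition ival :: "(nat \<Rightarrow> real measure) \<Rightarrow> nat \<Rightarrow> real set" where
  "ival d v = {lo d v<..<hi d v}"

definition valid_instance ::
  "nat set \<Rightarrow> nat set set \<Rightarrow> (nat \<Rightarrow> real) \<Rightarrow> (nat \<Rightarrow> real measure) \<Rightarrow> bool" where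
  "valid_instance V E c d \<longleftrightarrow>
     finite V \<and> (\<forall>F\<in>E. F \<subseteq> V \<and> 2 \<le> card F) \<and>
     (\<forall>v\<in>V. 0 \<le> c v) \<and>
     (\<forall>v\<in>V. prob_space (d v) \<and> sets (d v) = sets borel
              \<and> absolutely_continuous lborel (d v)
              \<and> (\<exists>a b. measure (d v) {..a} = 0 \<and> measure (d v) {b..} = 0))"

definition resolved ::
  "(nat \<Rightarrow> real measure) \<Rightarrow> nat set \<Rightarrow> (nat \<Rightarrow> real) \<Rightarrow> nat set \<Rightarrow> bool" where
  "resolved d Q w F \<longleftrightarrow>
     (\<exists>v\<in>F. \<forall>w'. (\<forall>u\<in>F. (u \<in> Q \<longrightarrow> w' u = w u) \<and> (u \<notin> Q \<longrightarrow> w' u \<in> ival d u))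
                 \<longrightarrow> (\<forall>u\<in>F. w' v \<le> w' u))"

definition feasible ::
  "nat set set \<Rightarrow> (nat \<Rightarrow> real measure) \<Rightarrow> nat set \<Rightarrow> (nat \<Rightarrow> real) \<Rightarrow> bool" where
  "feasible E d Q w \<longleftrightarrow> (\<forall>F\<in>E. resolved d Q w F)"

definition OPT ::
  "nat set \<Rightarrow> nat set set \<Rightarrow> (nat \<Rightarrow> real) \<Rightarrow> (nat \<Rightarrow> real measure) \<Rightarrow> (nat \<Rightarrow> real) \<Rightarrow> real" where
  "OPT V E c d w = Min {sum c Q | Q. Q \<subseteq> V \<and> feasible E d Q w}"

definition realizations :: "nat set \<Rightarrow> (nat \<Rightarrow> real measure) \<Rightarrow> (nat \<Rightarrow> real) measure" where
  "realizations V d = (\<Pi>\<^sub>M v\<in>V. d v)"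

definition expected_OPT ::
  "nat set \<Rightarrow> nat set set \<Rightarrow> (nat \<Rightarrow> real) \<Rightarrow> (nat \<Rightarrow> real measure) \<Rightarrow> real" where
  "expected_OPT V E c d = (\<integral>w. OPT V E c d w \<partial>realizations V d)"

definition vc_edge :: "nat set set \<Rightarrow> (nat \<Rightarrow> real measure) \<Rightarrow> nat \<Rightarrow> nat \<Rightarrow> bool" where
  "vc_edge E d v u \<longleftrightarrow> u \<noteq> v \<and>
     (\<exists>F\<in>E. u \<in> F \<and> v \<in> F \<and> (\<forall>x\<in>F. lo d v \<le> lo d x) \<and> ival d v \<inter> ival d u \<noteq> {})"

definition vc_graph_edge :: "nat set set \<Rightarrow> (nat \<Rightarrow> real measure) \<Rightarrow> nat \<Rightarrow> nat \<Rightarrow> bool" where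
  "vc_graph_edge E d u v \<longleftrightarrow> vc_edge E d u v \<or> vc_edge E d v u"

definition is_vertex_cover :: "nat set \<Rightarrow> nat set set \<Rightarrow> (nat \<Rightarrow> real measure) \<Rightarrow> nat set \<Rightarrow> bool" where
  "is_vertex_cover V E d VC \<longleftrightarrow> VC \<subseteq> V \<and> (\<forall>u v. vc_graph_edge E d u v \<longrightarrow> u \<in> VC \<or> v \<in> VC)"

definition vc_bipartite :: "nat set \<Rightarrow> nat set set \<Rightarrow> (nat \<Rightarrow> real measure) \<Rightarrow> bool" where
  "vc_bipartite V E d \<longleftrightarrow>
     (\<exists>X \<subseteq> V. \<forall>u v. vc_graph_edge E d u v \<longrightarrow> (u \<in> X \<longleftrightarrow> v \<notin> X))"

(* bipartiteness of a graph whose edges are 2-element sets *)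
definition graph_bipartite :: "nat set \<Rightarrow> nat set set \<Rightarrow> bool" where
  "graph_bipartite V E \<longleftrightarrow> (\<exists>X \<subseteq> V. \<forall>F\<in>E. card (F \<inter> X) = 1)"

(* Already queried vertices
   are inserted again, which is a no-op. *)
fun scan :: "(nat set \<Rightarrow> bool) \<Rightarrow> nat list \<Rightarrow> nat set \<Rightarrow> nat set" where
  "scan res [] Q = Q"
| "scan res (x # xs) Q = (if res Q then Q else scan res xs (insert x Q))"

definition vc_alg_queries ::
  "(nat \<Rightarrow> real measure) \<Rightarrow> nat set \<Rightarrow> nat set list \<Rightarrow> (nat set \<Rightarrow> nat list)
     \<Rightarrow> (nat \<Rightarrow> real) \<Rightarrow> nat set" where
  "vc_alg_queries d VC Es ordF w =
     foldl (\<lambda>Q F. scan (\<lambda>Q'. resolved d Q' w F) (ordF F) Q) VC Es"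

definition vc_alg_valid ::
  "nat set \<Rightarrow> nat set set \<Rightarrow> (nat \<Rightarrow> real measure) \<Rightarrow> nat set \<Rightarrow> nat set list
     \<Rightarrow> (nat set \<Rightarrow> nat list) \<Rightarrow> bool" where
  "vc_alg_valid V E d VC Es ordF \<longleftrightarrow>
     is_vertex_cover V E d VC \<and> distinct Es \<and> set Es = E \<and>
     (\<forall>F\<in>E. distinct (ordF F) \<and> set (ordF F) = F
             \<and> sorted_wrt (\<lambda>a b. lo d a \<le> lo d b) (ordF F))"

definition expected_alg ::
  "nat set \<Rightarrow> (nat \<Rightarrow> real) \<Rightarrow> (nat \<Rightarrow> real measure) \<Rightarrow> nat set \<Rightarrow> nat set list
     \<Rightarrow> (nat set \<Rightarrow> nat list) \<Rightarrow> real" where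
  "expected_alg V c d VC Es ordF =
     (\<integral>w. sum c (vc_alg_queries d VC Es ordF w) \<partial>realizations V d)"

definition lower_bound_instance ::
  "real \<Rightarrow> nat set \<Rightarrow> nat set set \<Rightarrow> (nat \<Rightarrow> real) \<Rightarrow> (nat \<Rightarrow> real measure) \<Rightarrow> bool" where
  "lower_bound_instance \<eta> V E c d \<longleftrightarrow>
     valid_instance V E c d \<and> 0 < expected_OPT V E c d \<and>
     (\<forall>VC Es ordF. vc_alg_valid V E d VC Es ordF \<longrightarrow>
        (3/2 - \<eta>) * expected_OPT V E c d \<le> expected_alg V c d VC Es ordF)"

end

theory Submission
  imports Defs
begin

lemma resolved_iff:
  assumes ne: "\<forall>u\<in>F. lo d u < hi d u"
  shows "resolved d Q w F \<longleftrightarrow>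
    (\<exists>v\<in>F. \<forall>u\<in>F. u \<noteq> v \<longrightarrow> (if v\<in>Q then w v else hi d v) \<le> (if u\<in>Q then w u else lo d u))"
proof
  assume "\<exists>v\<in>F. \<forall>u\<in>F. u \<noteq> v \<longrightarrow> (if v\<in>Q then w v else hi d v) \<le> (if u\<in>Q then w u else lo d u)"
  then obtain v where v: "v \<in> F" and h: "\<forall>u\<in>F. u \<noteq> v \<longrightarrow> (if v\<in>Q then w v else hi d v) \<le> (if u\<in>Q then w u else lo d u)" by blast
  show "resolved d Q w F"
    unfolding resolved_def
  proof (intro bexI[OF _ v] allI impI ballI)
    fix w' u assume c: "\<forall>u\<in>F. (u \<in> Q \<longrightarrow> w' u = w u) \<and> (u \<notin> Q \<longrightarrow> w' u \<in> ival d u)" and u: "u \<in> F"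
    show "w' v \<le> w' u"
    proof (cases "u = v")
      case False
      with h u have hh: "(if v\<in>Q then w v else hi d v) \<le> (if u\<in>Q then w u else lo d u)" by blast
      have "w' v \<le> (if v\<in>Q then w v else hi d v)" using c v by (auto simp: ival_def)
      moreover have "(if u\<in>Q then w u else lo d u) \<le> w' u" using c u by (auto simp: ival_def)
      ultimately show ?thesis using hh by linarith
    qed simp
  qed
next
  assume r: "resolved d Q w F"
  then obtain v where v: "v \<in> F" and h: "\<forall>w'. (\<forall>u\<in>F. (u \<in> Q \<longrightarrow> w' u = w u) \<and> (u \<notin> Q \<longrightarrow> w' u \<in> ival d u))
                 \<longrightarrow> (\<forall>u\<in>F. w' v \<le> w' u)" unfolding resolved_def by blast
  define m where "m x = (if x \<in> Q then w x else (lo d x + hi d x) / 2)" for x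
  have mok: "\<forall>u\<in>F. (u \<in> Q \<longrightarrow> m u = w u) \<and> (u \<notin> Q \<longrightarrow> m u \<in> ival d u)"
    using ne by (auto simp: m_def ival_def)
  show "\<exists>v\<in>F. \<forall>u\<in>F. u \<noteq> v \<longrightarrow> (if v\<in>Q then w v else hi d v) \<le> (if u\<in>Q then w u else lo d u)"
  proof (intro bexI[OF _ v] ballI impI, rule ccontr)
    fix u assume u: "u \<in> F" and uv: "u \<noteq> v"
      and nl: "\<not> (if v\<in>Q then w v else hi d v) \<le> (if u\<in>Q then w u else lo d u)"
    have luv: "lo d u < hi d u" "lo d v < hi d v" using ne u v by auto
    obtain s t where st: "t < s" "v \<in> Q \<longrightarrow> s = w v" "v \<notin> Q \<longrightarrow> s \<in> ival d v"
         "u \<in> Q \<longrightarrow> t = w u" "u \<notin> Q \<longrightarrow> t \<in> ival d u"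
    proof (cases "v \<in> Q"; cases "u \<in> Q")
      assume "v \<in> Q" "u \<in> Q" thus ?thesis using nl that[of "w u" "w v"] by auto
    next
      assume a: "v \<in> Q" "u \<notin> Q"
      define t where "t = (lo d u + min (w v) (hi d u)) / 2"
      have "t < w v" "t \<in> ival d u" using nl a luv by (auto simp: t_def ival_def min_def)
      thus ?thesis using a by (intro that[of t "w v"]) auto
    next
      assume a: "v \<notin> Q" "u \<in> Q"
      define s where "s = (max (w u) (lo d v) + hi d v) / 2"
      have "w u < s" "s \<in> ival d v" using nl a luv by (auto simp: s_def ival_def max_def)
      thus ?thesis using a by (intro that[of "w u" s]) auto
    next
      assume a: "v \<notin> Q" "u \<notin> Q"
      define s where "s = (max (lo d u) (lo d v) + hi d v) / 2"
      define t where "t = (lo d u + min s (hi d u)) / 2"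
      have "s \<in> ival d v" using nl a luv by (auto simp: s_def ival_def max_def)
      moreover have "lo d u < s" using nl a luv by (auto simp: s_def max_def)
      moreover have "t < s" "t \<in> ival d u" using calculation luv by (auto simp: t_def ival_def min_def)
      ultimately show ?thesis using a by (intro that[of t s]) auto
    qed
    define w' where "w' x = (if x = v then s else if x = u then t else m x)" for x
    have "\<forall>x\<in>F. (x \<in> Q \<longrightarrow> w' x = w x) \<and> (x \<notin> Q \<longrightarrow> w' x \<in> ival d x)"
      using mok st uv by (auto simp: w'_def)
    with h u have "w' v \<le> w' u" by blast
    thus False using st uv by (simp add: w'_def)
  qed
qed

lemma comp_meas:
  assumes "sets (d v) = sets borel" "v \<in> V"
  shows "(\<lambda>w. w v) \<in> borel_measurable (PiM V d)"
proof -
  have "(\<lambda>w. w v) \<in> measurable (PiM V d) (d v)" using assms(2) by (rule measurable_component_singleton)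
  moreover have "measurable (PiM V d) (d v) = measurable (PiM V d) borel"
    by (rule measurable_cong_sets) (simp_all add: assms(1))
  ultimately show ?thesis by simp
qed

lemma res_sets:
  assumes sd: "\<And>v. sets (d v) = sets borel" and F: "finite F" "F \<subseteq> V" and ne: "\<forall>u\<in>F. lo d u < hi d u"
  shows "{w\<in>space (PiM V d). resolved d Q w F} \<in> sets (PiM V d)"
proof -
  let ?M = "PiM V d"
  have eq: "{w\<in>space ?M. resolved d Q w F} = {w\<in>space ?M. \<exists>v\<in>F. \<forall>u\<in>F. u \<noteq> v \<longrightarrow> (if v\<in>Q then w v else hi d v) \<le> (if u\<in>Q then w u else lo d u)}"
    using resolved_iff[OF ne] by blast
  have p: "{w\<in>space ?M. u \<noteq> v \<longrightarrow> (if v\<in>Q then w v else hi d v) \<le> (if u\<in>Q then w u else lo d u)} \<in> sets ?M"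
    if "u \<in> F" "v \<in> F" for u v
  proof -
    have mu: "(\<lambda>w. w u) \<in> borel_measurable ?M" and mv: "(\<lambda>w. w v) \<in> borel_measurable ?M"
      using comp_meas[where d=d and V=V, OF sd] F that by auto
    show ?thesis using mu mv by (cases "u = v"; cases "v \<in> Q"; cases "u \<in> Q") simp_all
  qed
  show ?thesis unfolding eq
    by (intro sets.sets_Collect_finite_Ex sets.sets_Collect_finite_All F p) 
qed

lemma feas_sets:
  assumes sd: "\<And>v. sets (d v) = sets borel" and V: "finite V" and E: "\<forall>F\<in>E. F \<subseteq> V"
    and ne: "\<forall>u\<in>V. lo d u < hi d u"
  shows "{w\<in>space (PiM V d). feasible E d Q w} \<in> sets (PiM V d)"
proof -
  have fE: "finite E" using E V by (meson Pow_iff finite_Pow_iff rev_finite_subset subsetI)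
  show ?thesis unfolding feasible_def
    by (intro sets.sets_Collect_finite_All fE res_sets[OF sd]) (use E V ne in \<open>auto intro: rev_finite_subset\<close>)
qed

lemma OPT_meas:
  assumes sd: "\<And>v. sets (d v) = sets borel" and V: "finite V" and E: "\<forall>F\<in>E. F \<subseteq> V"
    and ne: "\<forall>u\<in>V. lo d u < hi d u"
  shows "OPT V E c d \<in> borel_measurable (PiM V d)"
proof -
  let ?M = "PiM V d"
  define f where "f w = {Q \<in> Pow V. feasible E d Q w}" for w
  have fm: "f \<in> ?M \<rightarrow>\<^sub>M count_space (Pow (Pow V))"
  proof (subst measurable_count_space_eq2)
    show "finite (Pow (Pow V))" using V by simp
    show "f \<in> space ?M \<rightarrow> Pow (Pow V) \<and> (\<forall>a\<in>Pow (Pow V). f -` {a} \<inter> space ?M \<in> sets ?M)"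
    proof (intro conjI ballI)
      show "f \<in> space ?M \<rightarrow> Pow (Pow V)" by (auto simp: f_def)
      fix S assume "S \<in> Pow (Pow V)"
      hence SV: "S \<subseteq> Pow V" by simp
      have fw: "f w = S \<longleftrightarrow> (\<forall>Q\<in>Pow V. feasible E d Q w \<longleftrightarrow> Q \<in> S)" for w
      proof
        assume "f w = S"
        thus "\<forall>Q\<in>Pow V. feasible E d Q w \<longleftrightarrow> Q \<in> S" unfolding f_def by blast
      next
        assume h: "\<forall>Q\<in>Pow V. feasible E d Q w \<longleftrightarrow> Q \<in> S"
        show "f w = S"
        proof (rule set_eqI)
          fix Q show "Q \<in> f w \<longleftrightarrow> Q \<in> S" using h SV unfolding f_def by blast
        qed
      qed
      have "f -` {S} \<inter> space ?M = {w\<in>space ?M. \<forall>Q\<in>Pow V. feasible E d Q w \<longleftrightarrow> Q \<in> S}"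
        using fw by blast
      also have "\<dots> \<in> sets ?M"
      proof (rule sets.sets_Collect_finite_All)
        show "finite (Pow V)" using V by simp
        fix Q
        have fs: "{w\<in>space ?M. feasible E d Q w} \<in> sets ?M" by (rule feas_sets[OF sd V E ne])
        show "{w\<in>space ?M. feasible E d Q w \<longleftrightarrow> Q \<in> S} \<in> sets ?M"
        proof (cases "Q \<in> S")
          case True thus ?thesis using fs by simp
        next
          case False
          have "{w\<in>space ?M. feasible E d Q w \<longleftrightarrow> Q \<in> S} = space ?M - {w\<in>space ?M. feasible E d Q w}"
            using False by auto
          thus ?thesis using fs by auto
        qed
      qed
      finally show "f -` {S} \<inter> space ?M \<in> sets ?M" .
    qed
  qed
  have eq: "OPT V E c d = (\<lambda>w. (\<lambda>S. Min (sum c ` S)) (f w))"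
    by (rule ext) (auto simp: OPT_def f_def intro!: arg_cong[where f=Min])
  show ?thesis unfolding eq
    by (rule measurable_compose[OF fm]) simp
qed

lemma scan_meas:
  assumes Qm: "Q \<in> M \<rightarrow>\<^sub>M count_space (Pow V)" and xs: "set xs \<subseteq> V" and V: "finite V"
    and P: "\<forall>S\<in>Pow V. {w\<in>space M. P S w} \<in> sets M"
  shows "(\<lambda>w. scan (\<lambda>Q'. P Q' w) xs (Q w)) \<in> M \<rightarrow>\<^sub>M count_space (Pow V)"
  using Qm xs
proof (induction xs arbitrary: Q)
  case Nil thus ?case by simp
next
  case (Cons x xs)
  have Qs: "Q w \<in> Pow V" if "w \<in> space M" for w
    using Cons.prems(1) that by (auto simp: measurable_def)
  have pre: "{w\<in>space M. Q w = S} \<in> sets M" if "S \<in> Pow V" for S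
  proof -
    have "Q -` {S} \<inter> space M \<in> sets M"
      using Cons.prems(1) that V by (subst (asm) measurable_count_space_eq2) auto
    moreover have "Q -` {S} \<inter> space M = {w\<in>space M. Q w = S}" by auto
    ultimately show ?thesis by simp
  qed
  have ps: "{w\<in>space M. P (Q w) w} \<in> sets M"
  proof -
    have "{w\<in>space M. P (Q w) w} = (\<Union>S\<in>Pow V. {w\<in>space M. Q w = S} \<inter> {w\<in>space M. P S w})"
      using Qs by blast
    also have "\<dots> \<in> sets M" using pre P V by (intro sets.finite_UN) auto
    finally show ?thesis .
  qed
  have ins: "(\<lambda>w. insert x (Q w)) \<in> M \<rightarrow>\<^sub>M count_space (Pow V)"
    by (rule measurable_compose[OF Cons.prems(1)]) (use Cons.prems(2) in auto)
  have "(\<lambda>w. scan (\<lambda>Q'. P Q' w) xs (insert x (Q w))) \<in> M \<rightarrow>\<^sub>M count_space (Pow V)"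
    using Cons.IH[OF ins] Cons.prems(2) by simp
  thus ?case using Cons.prems(1) ps by (simp add: measurable_If)
qed

lemma fold_meas:
  assumes Qm: "Q \<in> M \<rightarrow>\<^sub>M count_space (Pow V)" and V: "finite V"
    and Es: "\<forall>F\<in>set Es. set (ordF F) \<subseteq> V \<and> (\<forall>S\<in>Pow V. {w\<in>space M. resolved d S w F} \<in> sets M)"
  shows "(\<lambda>w. foldl (\<lambda>Q F. scan (\<lambda>Q'. resolved d Q' w F) (ordF F) Q) (Q w) Es) \<in> M \<rightarrow>\<^sub>M count_space (Pow V)"
  using Qm Es
proof (induction Es arbitrary: Q)
  case Nil thus ?case by simp
next
  case (Cons F Fs)
  have "(\<lambda>w. scan (\<lambda>Q'. resolved d Q' w F) (ordF F) (Q w)) \<in> M \<rightarrow>\<^sub>M count_space (Pow V)"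
    using Cons.prems by (intro scan_meas V) auto
  from Cons.IH[OF this] Cons.prems(2) show ?case by simp
qed

lemma alg_meas:
  assumes sd: "\<And>v. sets (d v) = sets borel" and V: "finite V" and E: "\<forall>F\<in>E. F \<subseteq> V"
    and ne: "\<forall>u\<in>V. lo d u < hi d u" and VC: "VC \<subseteq> V" and Es: "set Es = E"
    and ord: "\<forall>F\<in>E. set (ordF F) = F"
  shows "(\<lambda>w. sum c (vc_alg_queries d VC Es ordF w)) \<in> borel_measurable (PiM V d)"
proof -
  have "(\<lambda>w. vc_alg_queries d VC Es ordF w) \<in> PiM V d \<rightarrow>\<^sub>M count_space (Pow V)"
    unfolding vc_alg_queries_def
  proof (rule fold_meas[where Q="\<lambda>_. VC", OF _ V])
    show "(\<lambda>_. VC) \<in> PiM V d \<rightarrow>\<^sub>M count_space (Pow V)" using VC by simp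
    show "\<forall>F\<in>set Es. set (ordF F) \<subseteq> V \<and> (\<forall>S\<in>Pow V. {w \<in> space (PiM V d). resolved d S w F} \<in> sets (PiM V d))"
    proof
      fix F assume F: "F \<in> set Es"
      hence FV: "F \<subseteq> V" using E Es by auto
      hence "finite F" "\<forall>u\<in>F. lo d u < hi d u" using V ne by (auto intro: rev_finite_subset)
      thus "set (ordF F) \<subseteq> V \<and> (\<forall>S\<in>Pow V. {w \<in> space (PiM V d). resolved d S w F} \<in> sets (PiM V d))"
        using res_sets[OF sd _ FV] FV ord F Es by auto
    qed
  qed
  thus ?thesis by (rule measurable_compose) simp
qed

lemma scan_sup: "Q \<subseteq> scan res xs Q"
  by (induction xs arbitrary: Q) (auto, blast)

lemma scan_sub: "scan res xs Q \<subseteq> Q \<union> set xs"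
  by (induction xs arbitrary: Q) auto

lemma scan_res: "res (scan res xs Q) \<or> set xs \<subseteq> scan res xs Q"
proof (induction xs arbitrary: Q)
  case Nil thus ?case by simp
next
  case (Cons x xs)
  show ?case
  proof (cases "res Q")
    case False
    have "insert x Q \<subseteq> scan res xs (insert x Q)" by (rule scan_sup)
    thus ?thesis using False Cons.IH[of "insert x Q"] by auto
  qed simp
qed

lemma fold_sup: "Q \<subseteq> foldl (\<lambda>Q F. scan (R F) (ordF F) Q) Q Es"
proof (induction Es arbitrary: Q)
  case (Cons F Fs)
  show ?case using scan_sup[of Q "R F" "ordF F"] Cons.IH[of "scan (R F) (ordF F) Q"] by auto
qed simp

lemma fold_sub: "foldl (\<lambda>Q F. scan (R F) (ordF F) Q) Q Es \<subseteq> Q \<union> (\<Union>F\<in>set Es. set (ordF F))"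
proof (induction Es arbitrary: Q)
  case (Cons F Fs)
  show ?case using scan_sub[of "R F" "ordF F" Q] Cons.IH[of "scan (R F) (ordF F) Q"] by auto
qed simp

lemma fold_prop:
  assumes "F \<in> set Es"
  shows "\<exists>Q'. Q' \<subseteq> foldl (\<lambda>Q F. scan (R F) (ordF F) Q) Q Es \<and> (R F Q' \<or> set (ordF F) \<subseteq> Q')"
  using assms
proof (induction Es arbitrary: Q)
  case (Cons G Gs)
  show ?case
  proof (cases "F = G")
    case True
    thus ?thesis using scan_res[of "R F" "ordF F" Q] fold_sup[of "scan (R F) (ordF F) Q" R ordF Gs]
      by auto
  next
    case False
    thus ?thesis using Cons by auto
  qed
qed simp

lemma int_comp:
  fixes d :: "nat \<Rightarrow> real measure"
  assumes P: "\<And>v. prob_space (d v)" and sd: "\<And>v. sets (d v) = sets borel" and v: "v \<in> V"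
    and B: "B \<in> sets borel"
  shows "(\<integral>w. indicator B (w v) \<partial>PiM V d) = measure (d v) B"
proof -
  have m: "(\<lambda>w. w v) \<in> PiM V d \<rightarrow>\<^sub>M d v" using v by (rule measurable_component_singleton)
  have "(\<integral>w. indicator B (w v) \<partial>PiM V d) = (\<integral>x. indicator B x \<partial>distr (PiM V d) (d v) (\<lambda>w. w v) :: real)"
    proof -
    have "(indicator B :: real \<Rightarrow> real) \<in> borel_measurable (d v)"
      using B by (simp add: measurable_cong_sets[OF sd refl])
    from integral_distr[OF m this] show ?thesis by (rule sym)
  qed
  also have "\<dots> = (\<integral>x. indicator B x \<partial>d v)" using distr_PiM_component[of V d v] P v by simp
  also have "\<dots> = measure (d v) B" using B sd[of v]
    by (simp add: sets_eq_imp_space_eq)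
  finally show ?thesis .
qed

lemma AE_comp:
  assumes P: "\<And>v. prob_space (d v)" and v: "v \<in> V" and ae: "AE x in d v. Pr x"
  shows "AE w in PiM V d. Pr (w v)"
  using AE_PiM_component[of V d v Pr] P v ae by simp

definition U2 :: "real \<Rightarrow> real \<Rightarrow> real \<Rightarrow> real \<Rightarrow> real measure" where
  "U2 p q r s = uniform_measure lborel ({p<..<q} \<union> {r<..<s})"

locale U2loc =
  fixes p q r s :: real
  assumes pq: "p < q" and qr: "q \<le> r" and rs: "r < s"
begin

abbreviation "S \<equiv> {p<..<q} \<union> {r<..<s}"

lemma emS: "emeasure lborel S = ennreal ((q-p)+(s-r))"
proof -
  have "{p<..<q} \<inter> {r<..<s} = {}" using qr by auto
  hence "emeasure lborel S = emeasure lborel {p<..<q} + emeasure lborel {r<..<s}"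
    by (subst plus_emeasure) auto
  thus ?thesis using pq rs by (simp add: ennreal_plus)
qed

lemma mS: "measure lborel S = (q-p)+(s-r)"
  using emS pq rs by (simp add: measure_def)

lemma ps: "prob_space (U2 p q r s)"
  unfolding U2_def using emS pq rs by (intro prob_space_uniform_measure) auto

lemma sets_U2: "sets (U2 p q r s) = sets borel"
  by (simp add: U2_def)

lemma ac: "absolutely_continuous lborel (U2 p q r s)"
  unfolding U2_def uniform_measure_def by (rule absolutely_continuousI_density) simp

lemma meas: "B \<in> sets borel \<Longrightarrow> measure (U2 p q r s) B = measure lborel (S \<inter> B) / ((q-p)+(s-r))"
  unfolding U2_def using emS pq rs by (subst measure_uniform_measure) (auto simp: mS)

lemma AE_S: "AE x in U2 p q r s. x \<in> S"
  unfolding U2_def by (rule AE_uniform_measureI) auto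

lemma lo0: "measure (U2 p q r s) {..a} = 0 \<longleftrightarrow> a \<le> p"
proof
  assume a: "a \<le> p"
  have "S \<inter> {..a} = {}" using a pq qr by auto
  thus "measure (U2 p q r s) {..a} = 0" by (simp add: meas)
next
  assume z: "measure (U2 p q r s) {..a} = 0"
  show "a \<le> p"
  proof (rule ccontr)
    assume "\<not> a \<le> p"
    define m where "m = min a q"
    have pm: "p < m" "m \<le> q" "m \<le> a" using \<open>\<not> a \<le> p\<close> pq by (auto simp: m_def)
    interpret P: prob_space "U2 p q r s" by (rule ps)
    have "measure (U2 p q r s) {p<..<m} \<le> measure (U2 p q r s) {..a}"
      using pm by (intro P.finite_measure_mono) (auto simp: sets_U2)
    moreover have "S \<inter> {p<..<m} = {p<..<m}" using pm by auto
    hence "measure (U2 p q r s) {p<..<m} = (m - p) / ((q-p)+(s-r))" using pm by (simp add: meas)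
    moreover have "(m - p) / ((q-p)+(s-r)) > 0" using pm pq rs by simp
    ultimately show False using z by linarith
  qed
qed

lemma hi0: "measure (U2 p q r s) {b..} = 0 \<longleftrightarrow> s \<le> b"
proof
  assume a: "s \<le> b"
  have "S \<inter> {b..} = {}" using a pq qr rs by auto
  thus "measure (U2 p q r s) {b..} = 0" by (simp add: meas)
next
  assume z: "measure (U2 p q r s) {b..} = 0"
  show "s \<le> b"
  proof (rule ccontr)
    assume "\<not> s \<le> b"
    define m where "m = max b r"
    have pm: "m < s" "r \<le> m" "b \<le> m" using \<open>\<not> s \<le> b\<close> rs by (auto simp: m_def)
    interpret P: prob_space "U2 p q r s" by (rule ps)
    have "measure (U2 p q r s) {m<..<s} \<le> measure (U2 p q r s) {b..}"
      using pm by (intro P.finite_measure_mono) (auto simp: sets_U2)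
    moreover have "S \<inter> {m<..<s} = {m<..<s}" using pm by auto
    hence "measure (U2 p q r s) {m<..<s} = (s - m) / ((q-p)+(s-r))" using pm by (simp add: meas)
    moreover have "(s - m) / ((q-p)+(s-r)) > 0" using pm pq rs by simp
    ultimately show False using z by linarith
  qed
qed

lemma lo_eq: "d v = U2 p q r s \<Longrightarrow> lo d v = p"
proof -
  assume dv: "d v = U2 p q r s"
  have "{a. measure (d v) {..a} = 0} = {..p}" using lo0 dv by auto
  thus ?thesis by (simp add: lo_def)
qed

lemma hi_eq: "d v = U2 p q r s \<Longrightarrow> hi d v = s"
proof -
  assume dv: "d v = U2 p q r s"
  have "{b. measure (d v) {b..} = 0} = {s..}" using hi0 dv by auto
  thus ?thesis by (simp add: hi_def)
qed

end


lemma resolved_all: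
  assumes "finite F" "F \<noteq> {}" "F \<subseteq> Q"
  shows "resolved d Q w F"
proof -
  obtain v where v: "v \<in> F" "\<forall>u\<in>F. w v \<le> w u"
  proof -
    have "Min (w ` F) \<in> w ` F" using assms by simp
    then obtain v where "v \<in> F" "w v = Min (w ` F)" by auto
    moreover have "\<forall>u\<in>F. Min (w ` F) \<le> w u" using assms by simp
    ultimately show ?thesis using that by auto
  qed
  show ?thesis unfolding resolved_def
  proof (intro bexI[OF _ v(1)] allI impI ballI)
    fix w' u assume h: "\<forall>u\<in>F. (u \<in> Q \<longrightarrow> w' u = w u) \<and> (u \<notin> Q \<longrightarrow> w' u \<in> ival d u)" and u: "u \<in> F"
    have "w' v = w v" "w' u = w u" using h u v(1) assms(3) by auto
    thus "w' v \<le> w' u" using v(2) u by simp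
  qed
qed

lemma OPT_le:
  assumes "finite V" "Q \<subseteq> V" "feasible E d Q w"
  shows "OPT V E c d w \<le> sum c Q"
proof -
  have "{sum c Q | Q. Q \<subseteq> V \<and> feasible E d Q w} \<subseteq> sum c ` Pow V" by auto
  hence "finite {sum c Q | Q. Q \<subseteq> V \<and> feasible E d Q w}" using assms(1) by (auto intro: finite_subset)
  thus ?thesis unfolding OPT_def using assms by (intro Min_le) auto
qed

lemma OPT_ge:
  assumes "finite V" "Q0 \<subseteq> V" "feasible E d Q0 w"
    and "\<And>Q. Q \<subseteq> V \<Longrightarrow> feasible E d Q w \<Longrightarrow> x \<le> sum c Q"
  shows "x \<le> OPT V E c d w"
proof -
  have "{sum c Q | Q. Q \<subseteq> V \<and> feasible E d Q w} \<subseteq> sum c ` Pow V" by auto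
  hence "finite {sum c Q | Q. Q \<subseteq> V \<and> feasible E d Q w}" using assms(1) by (auto intro: finite_subset)
  moreover have "{sum c Q | Q. Q \<subseteq> V \<and> feasible E d Q w} \<noteq> {}" using assms(2,3) by auto
  ultimately show ?thesis unfolding OPT_def using assms(4) by (subst Min_ge_iff) auto
qed

locale Inst =
  fixes n :: nat and \<delta> cz \<alpha> \<beta> :: real and E :: "nat set set"
  assumes n1: "1 \<le> n" and d0: "0 < \<delta>" and d1: "\<delta> \<le> 1/2" and cz: "0 \<le> cz"
    and a0: "0 < \<alpha>" and ab: "\<alpha> \<le> \<beta>" and b10: "\<beta> < 10"
    and Ed: "\<forall>F\<in>E. F \<subseteq> {..2*n} \<and> 2 \<le> card F"
begin

definition V :: "nat set" where "V = {..2*n}"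
definition d :: "nat \<Rightarrow> real measure" where
  "d v = (if v = 0 then U2 (1/2) 1 10 (21/2) else if odd v then U2 0 \<alpha> \<beta> 10 else U2 1 (1+\<delta>) 10 11)"
definition c :: "nat \<Rightarrow> real" where "c v = (if v = 0 then cz else 1)"
definition Sv :: "nat \<Rightarrow> real set" where
  "Sv v = (if v = 0 then {1/2<..<1} \<union> {10<..<21/2} else if odd v then {0<..<\<alpha>} \<union> {\<beta><..<10}
           else {1<..<1+\<delta>} \<union> {10<..<11})"

abbreviation "M \<equiv> realizations V d"

lemma UZ: "U2loc (1/2) 1 10 (21/2)" by unfold_locales auto
lemma UA: "U2loc 0 \<alpha> \<beta> 10" using a0 ab b10 by unfold_locales auto
lemma UB: "U2loc 1 (1+\<delta>) 10 11" using d0 d1 by unfold_locales auto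

lemma dps: "prob_space (d v)"
  by (simp add: d_def U2loc.ps[OF UZ] U2loc.ps[OF UA] U2loc.ps[OF UB])

lemma dsets: "sets (d v) = sets borel"
  by (simp add: d_def U2loc.sets_U2[OF UZ] U2loc.sets_U2[OF UA] U2loc.sets_U2[OF UB])

lemma dac: "absolutely_continuous lborel (d v)"
  by (simp add: d_def U2loc.ac[OF UZ] U2loc.ac[OF UA] U2loc.ac[OF UB])

lemma lo_d: "lo d v = (if v = 0 then 1/2 else if odd v then 0 else 1)"
proof -
  consider "v = 0" | "v \<noteq> 0" "odd v" | "v \<noteq> 0" "even v" by blast
  thus ?thesis
  proof cases
    case 1 thus ?thesis using U2loc.lo_eq[OF UZ, of d v] by (simp add: d_def)
  next
    case 2 thus ?thesis using U2loc.lo_eq[OF UA, of d v] by (simp add: d_def)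
  next
    case 3 thus ?thesis using U2loc.lo_eq[OF UB, of d v] by (simp add: d_def)
  qed
qed

lemma hi_d: "hi d v = (if v = 0 then 21/2 else if odd v then 10 else 11)"
proof -
  consider "v = 0" | "v \<noteq> 0" "odd v" | "v \<noteq> 0" "even v" by blast
  thus ?thesis
  proof cases
    case 1 thus ?thesis using U2loc.hi_eq[OF UZ, of d v] by (simp add: d_def)
  next
    case 2 thus ?thesis using U2loc.hi_eq[OF UA, of d v] by (simp add: d_def)
  next
    case 3 thus ?thesis using U2loc.hi_eq[OF UB, of d v] by (simp add: d_def)
  qed
qed

lemma ne: "lo d u < hi d u" by (simp add: lo_d hi_d)

lemma finV: "finite V" by (simp add: V_def)

lemma EV: "\<forall>F\<in>E. F \<subseteq> V" using Ed by (simp add: V_def)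

lemma finE: "\<forall>F\<in>E. finite F \<and> F \<noteq> {}"
proof
  fix F assume "F \<in> E"
  hence "F \<subseteq> V" "2 \<le> card F" using Ed EV by auto
  thus "finite F \<and> F \<noteq> {}" using finV by (auto intro: rev_finite_subset)
qed

lemma ex_lh: "\<exists>a b. measure (d v) {..a} = 0 \<and> measure (d v) {b..} = 0"
proof -
  consider "v = 0" | "v \<noteq> 0" "odd v" | "v \<noteq> 0" "even v" by blast
  thus ?thesis
  proof cases
    case 1
    hence "d v = U2 (1/2) 1 10 (21/2)" by (simp add: d_def)
    thus ?thesis using U2loc.lo0[OF UZ, of "1/2"] U2loc.hi0[OF UZ, of "21/2"] by auto
  next
    case 2
    hence "d v = U2 0 \<alpha> \<beta> 10" by (simp add: d_def)
    thus ?thesis using U2loc.lo0[OF UA, of 0] U2loc.hi0[OF UA, of 10] by auto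
  next
    case 3
    hence "d v = U2 1 (1+\<delta>) 10 11" by (simp add: d_def)
    thus ?thesis using U2loc.lo0[OF UB, of 1] U2loc.hi0[OF UB, of 11] by auto
  qed
qed

lemma valid: "valid_instance V E c d"
  unfolding valid_instance_def
proof (intro conjI)
  show "\<forall>F\<in>E. F \<subseteq> V \<and> 2 \<le> card F" using Ed by (simp add: V_def)
  show "\<forall>v\<in>V. 0 \<le> c v" using cz by (simp add: c_def)
  show "\<forall>v\<in>V. prob_space (d v) \<and> sets (d v) = sets borel \<and> absolutely_continuous lborel (d v) \<and>
        (\<exists>a b. measure (d v) {..a} = 0 \<and> measure (d v) {b..} = 0)"
    using dps dsets dac ex_lh by blast
qed (rule finV)

lemma AE_typ: "AE w in M. \<forall>v\<in>V. w v \<in> Sv v"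
  unfolding realizations_def
proof (rule eventually_ball_finite[OF finV], intro ballI)
  fix v assume v: "v \<in> V"
  have "AE x in d v. x \<in> Sv v"
  proof -
    consider "v = 0" | "v \<noteq> 0" "odd v" | "v \<noteq> 0" "even v" by blast
    thus ?thesis
    proof cases
      case 1
      hence dv: "d v = U2 (1/2) 1 10 (21/2)" and sv: "Sv v = {1/2<..<1} \<union> {10<..<21/2}" by (simp_all add: d_def Sv_def)
      show ?thesis unfolding dv sv by (rule U2loc.AE_S[OF UZ])
    next
      case 2
      hence dv: "d v = U2 0 \<alpha> \<beta> 10" and sv: "Sv v = {0<..<\<alpha>} \<union> {\<beta><..<10}" by (simp_all add: d_def Sv_def)
      show ?thesis unfolding dv sv by (rule U2loc.AE_S[OF UA])
    next
      case 3
      hence dv: "d v = U2 1 (1+\<delta>) 10 11" and sv: "Sv v = {1<..<1+\<delta>} \<union> {10<..<11}" by (simp_all add: d_def Sv_def)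
      show ?thesis unfolding dv sv by (rule U2loc.AE_S[OF UB])
    qed
  qed
  thus "AE w in PiM V d. w v \<in> Sv v" by (rule AE_comp[where d=d and V=V and v=v and Pr="\<lambda>x. x \<in> Sv v", OF dps v])
qed

lemma probM: "prob_space M"
  unfolding realizations_def by (rule prob_space_PiM) (rule dps)

lemma feasV: "feasible E d V w"
  unfolding feasible_def
proof
  fix F assume F: "F \<in> E"
  show "resolved d V w F" by (rule resolved_all) (use finE EV F in auto)
qed

lemma OPT_bounds: "0 \<le> OPT V E c d w" "OPT V E c d w \<le> sum c V"
proof -
  show "OPT V E c d w \<le> sum c V" by (rule OPT_le[OF finV order_refl feasV])
  show "0 \<le> OPT V E c d w"
  proof (rule OPT_ge[OF finV order_refl feasV])
    fix Q show "0 \<le> sum c Q" by (rule sum_nonneg) (simp add: c_def cz)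
  qed
qed

lemma neV: "\<forall>u\<in>V. lo d u < hi d u" using ne by simp

lemma OPT_int: "integrable M (OPT V E c d)"
proof -
  interpret P: prob_space M by (rule probM)
  show ?thesis
  proof (rule P.integrable_const_bound[where B="sum c V"])
    show "AE x in M. norm (OPT V E c d x) \<le> sum c V" using OPT_bounds by simp
    show "OPT V E c d \<in> borel_measurable M"
      unfolding realizations_def by (rule OPT_meas[where d=d and c=c, OF dsets finV EV neV])
  qed
qed

lemma alg_sub:
  assumes "vc_alg_valid V E d VC Es ordF"
  shows "vc_alg_queries d VC Es ordF w \<subseteq> V"
proof -
  have h1: "VC \<subseteq> V" and h2: "set Es = E" and h3: "\<forall>F\<in>E. set (ordF F) = F"
    using assms by (auto simp: vc_alg_valid_def is_vertex_cover_def)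
  have s1: "foldl (\<lambda>Q F. scan (\<lambda>Q'. resolved d Q' w F) (ordF F) Q) VC Es \<subseteq> VC \<union> (\<Union>F\<in>set Es. set (ordF F))"
    by (rule fold_sub)
  have s2: "(\<Union>F\<in>set Es. set (ordF F)) \<subseteq> V" using EV h2 h3 by auto
  show ?thesis unfolding vc_alg_queries_def using s1 s2 h1 by blast
qed

lemma alg_int:
  assumes "vc_alg_valid V E d VC Es ordF"
  shows "integrable M (\<lambda>w. sum c (vc_alg_queries d VC Es ordF w))"
proof -
  interpret P: prob_space M by (rule probM)
  have h: "VC \<subseteq> V" "set Es = E" "\<forall>F\<in>E. set (ordF F) = F"
    using assms by (auto simp: vc_alg_valid_def is_vertex_cover_def)
  show ?thesis
  proof (rule P.integrable_const_bound[where B="sum c V"])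
    show "AE x in M. norm (sum c (vc_alg_queries d VC Es ordF x)) \<le> sum c V"
    proof (intro AE_I2)
      fix w
      have s: "vc_alg_queries d VC Es ordF w \<subseteq> V" by (rule alg_sub[OF assms])
      have nn: "\<forall>v. 0 \<le> c v" using cz by (simp add: c_def)
      have "0 \<le> sum c (vc_alg_queries d VC Es ordF w)" using nn by (simp add: sum_nonneg)
      moreover have "sum c (vc_alg_queries d VC Es ordF w) \<le> sum c V"
        using s nn finV by (intro sum_mono2) auto
      ultimately show "norm (sum c (vc_alg_queries d VC Es ordF w)) \<le> sum c V" by simp
    qed
    show "(\<lambda>w. sum c (vc_alg_queries d VC Es ordF w)) \<in> borel_measurable M"
      unfolding realizations_def by (rule alg_meas[where d=d and c=c, OF dsets finV EV neV h])
  qed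
qed

lemma ind_meas:
  assumes u: "u \<in> V" and A: "A \<in> sets borel"
  shows "(\<lambda>w. indicator A (w u) :: real) \<in> borel_measurable M"
proof -
  have "(\<lambda>w. w u) \<in> borel_measurable M"
    unfolding realizations_def by (rule comp_meas[OF dsets u])
  thus ?thesis using A by (intro measurable_compose[OF _ borel_measurable_indicator]) auto
qed

lemma ind_int:
  assumes u: "u \<in> V" and A: "A \<in> sets borel"
  shows "integrable M (\<lambda>w. indicator A (w u) :: real)"
proof -
  interpret P: prob_space M by (rule probM)
  show ?thesis by (rule P.integrable_const_bound[where B=1]) (auto simp: ind_meas[OF u A] split: split_indicator)
qed

lemma ind_integral:
  assumes u: "u \<in> V" and A: "A \<in> sets borel"
  shows "(\<integral>w. indicator A (w u) \<partial>M) = measure (d u) A"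
  unfolding realizations_def by (rule int_comp[OF dps dsets u A])

lemma term_int:
  assumes "u \<in> V" "v \<in> V" "A \<in> sets borel" "B \<in> sets borel"
  shows "integrable M (\<lambda>w. k + indicator A (w u) + s * indicator B (w v) :: real)"
proof -
  interpret P: prob_space M by (rule probM)
  have c: "integrable M (\<lambda>w. k :: real)" by (rule P.integrable_const)
  show ?thesis
    by (rule Bochner_Integration.integrable_add[OF Bochner_Integration.integrable_add[OF c ind_int[OF assms(1,3)]]
        integrable_mult_right[OF ind_int[OF assms(2,4)]]])
qed

lemma term_integral:
  assumes "u \<in> V" "v \<in> V" "A \<in> sets borel" "B \<in> sets borel"
  shows "(\<integral>w. k + indicator A (w u) + s * indicator B (w v) \<partial>M) = k + measure (d u) A + s * measure (d v) B"
proof -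
  interpret P: prob_space M by (rule probM)
  have i1: "integrable M (\<lambda>w. indicator A (w u) :: real)" by (rule ind_int[OF assms(1,3)])
  have i2: "integrable M (\<lambda>w. indicator B (w v) :: real)" by (rule ind_int[OF assms(2,4)])
  have "(\<integral>w. k + indicator A (w u) + s * indicator B (w v) \<partial>M)
      = (\<integral>w. k + indicator A (w u) \<partial>M) + (\<integral>w. s * indicator B (w v) \<partial>M)"
    using term_int[OF assms, of k 0] i2 by (intro Bochner_Integration.integral_add integrable_mult_right) auto
  also have "(\<integral>w. k + indicator A (w u) \<partial>M) = k + (\<integral>w. indicator A (w u) \<partial>M)"
    using i1 by (subst Bochner_Integration.integral_add) (auto simp: P.prob_space)
  also have "(\<integral>w. s * indicator B (w v) \<partial>M) = s * (\<integral>w. indicator B (w v) \<partial>M)"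
    by simp
  finally show ?thesis using ind_integral[OF assms(1,3)] ind_integral[OF assms(2,4)] by simp
qed

lemma sum_int:
  assumes "finite I" "\<forall>i\<in>I. u i \<in> V \<and> v i \<in> V \<and> A i \<in> sets borel \<and> B i \<in> sets borel"
  shows "integrable M (\<lambda>w. (\<Sum>i\<in>I. k i + indicator (A i) (w (u i)) + s i * indicator (B i) (w (v i))) :: real)"
  by (rule Bochner_Integration.integrable_sum) (use assms in \<open>auto intro!: term_int\<close>)

lemma sum_integral:
  assumes "finite I" "\<forall>i\<in>I. u i \<in> V \<and> v i \<in> V \<and> A i \<in> sets borel \<and> B i \<in> sets borel"
  shows "(\<integral>w. (\<Sum>i\<in>I. k i + indicator (A i) (w (u i)) + s i * indicator (B i) (w (v i))) \<partial>M)
       = (\<Sum>i\<in>I. k i + measure (d (u i)) (A i) + s i * measure (d (v i)) (B i))"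
  using assms by (subst Bochner_Integration.integral_sum) (auto intro!: term_int term_integral sum.cong)

definition Qs :: "(nat \<Rightarrow> bool) \<Rightarrow> (nat \<Rightarrow> bool) \<Rightarrow> nat set" where
  "Qs X Y = insert 0 (\<Union>i<n. {x. (x = 2*i+1 \<and> X i) \<or> (x = 2*i+2 \<and> Y i)})"

lemma Qs_0: "0 \<in> Qs X Y" by (simp add: Qs_def)

lemma Qs_a: "i < n \<Longrightarrow> 2*i+1 \<in> Qs X Y \<longleftrightarrow> X i"
  by (auto simp: Qs_def) presburger+

lemma Qs_b: "i < n \<Longrightarrow> 2*i+2 \<in> Qs X Y \<longleftrightarrow> Y i"
  by (auto simp: Qs_def) presburger+

lemma Qs_V: "Qs X Y \<subseteq> V"
  by (auto simp: Qs_def V_def)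

lemma pair_disj: "i \<noteq> j \<Longrightarrow> {2*i+1, 2*i+2} \<inter> {2*j+1, (2*j+2::nat)} = {}"
  by auto

lemma Qs_cost: "sum c (Qs X Y) = cz + (\<Sum>i<n. of_bool (X i) + of_bool (Y i))"
proof -
  define B where "B i = {x. (x = 2*i+1 \<and> X i) \<or> (x = 2*i+2 \<and> Y i)}" for i
  have Bsub: "B i \<subseteq> {2*i+1, 2*i+2}" for i by (auto simp: B_def)
  have fin: "finite (B i)" for i using Bsub by (rule finite_subset) simp
  have "0 \<notin> (\<Union>i<n. B i)" by (auto simp: B_def)
  moreover have "finite (\<Union>i<n. B i)" using fin by simp
  moreover have "Qs X Y = insert 0 (\<Union>i<n. B i)" by (simp add: Qs_def B_def)
  ultimately have "sum c (Qs X Y) = c 0 + sum c (\<Union>i<n. B i)"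
    by simp
  also have "sum c (\<Union>i<n. B i) = (\<Sum>i<n. sum c (B i))"
  proof (rule sum.UNION_disjoint)
    show "\<forall>i\<in>{..<n}. \<forall>j\<in>{..<n}. i \<noteq> j \<longrightarrow> B i \<inter> B j = {}"
      using Bsub pair_disj by blast
  qed (use fin in auto)
  also have "(\<Sum>i<n. sum c (B i)) = (\<Sum>i<n. of_bool (X i) + of_bool (Y i))"
  proof (rule sum.cong[OF refl])
    fix i
    have "B i = (if X i then {2*i+1} else {}) \<union> (if Y i then {2*i+2} else {})" by (auto simp: B_def)
    thus "sum c (B i) = of_bool (X i) + of_bool (Y i)" by (simp add: c_def)
  qed
  finally show ?thesis by (simp add: c_def)
qed

lemma alg_count:
  assumes "F \<subseteq> V"
  shows "(\<Sum>i<n. real (card (F \<inter> {2*i+1, 2*i+2}))) \<le> sum c F"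
proof -
  have nn: "\<forall>v. 0 \<le> c v" using cz by (simp add: c_def)
  have fF: "finite F" using assms finV by (rule finite_subset)
  have "sum c (\<Union>i<n. F \<inter> {2*i+1, 2*i+2}) = (\<Sum>i<n. sum c (F \<inter> {2*i+1, 2*i+2}))"
  proof (rule sum.UNION_disjoint)
    show "\<forall>i\<in>{..<n}. \<forall>j\<in>{..<n}. i \<noteq> j \<longrightarrow> F \<inter> {2*i+1, 2*i+2} \<inter> (F \<inter> {2*j+1, 2*j+2}) = {}"
      using pair_disj by blast
  qed auto
  also have "(\<Sum>i<n. sum c (F \<inter> {2*i+1, 2*i+2})) = (\<Sum>i<n. real (card (F \<inter> {2*i+1, 2*i+2})))"
  proof (rule sum.cong[OF refl])
    fix i
    have "sum c (F \<inter> {2*i+1, 2*i+2}) = sum (\<lambda>_. 1::real) (F \<inter> {2*i+1, 2*i+2})"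
      by (rule sum.cong) (auto simp: c_def)
    thus "sum c (F \<inter> {2*i+1, 2*i+2}) = real (card (F \<inter> {2*i+1, 2*i+2}))" by simp
  qed
  finally have eq: "sum c (\<Union>i<n. F \<inter> {2*i+1, 2*i+2}) = (\<Sum>i<n. real (card (F \<inter> {2*i+1, 2*i+2})))" .
  have "sum c (\<Union>i<n. F \<inter> {2*i+1, 2*i+2}) \<le> sum c F"
    using fF nn by (intro sum_mono2) auto
  thus ?thesis using eq by simp
qed

lemma alg_lower_int:
  assumes valid: "vc_alg_valid V E d VC Es ordF"
    and cover: "\<forall>i<n. 2*i+1 \<in> VC \<or> 2*i+2 \<in> VC"
    and bB: "\<And>i w. i < n \<Longrightarrow> 2*i+1 \<in> VC \<Longrightarrow> w 0 \<in> ZB \<Longrightarrow> w (2*i+1) \<notin> AB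
               \<Longrightarrow> 2*i+2 \<in> vc_alg_queries d VC Es ordF w"
    and bA: "\<And>i w. i < n \<Longrightarrow> 2*i+1 \<notin> VC \<Longrightarrow> w 0 \<in> ZA \<Longrightarrow> w (2*i+2) \<notin> BB
               \<Longrightarrow> 2*i+1 \<in> vc_alg_queries d VC Es ordF w"
    and sets: "ZA \<in> sets borel" "ZB \<in> sets borel" "AB \<in> sets borel" "BB \<in> sets borel"
  shows "(\<Sum>i<n. if 2*i+1 \<in> VC then 1 + measure (d 0) ZB - measure (d (2*i+1)) AB
                 else 1 + measure (d 0) ZA - measure (d (2*i+2)) BB) \<le> expected_alg V c d VC Es ordF"
proof -
  let ?A = "\<lambda>w. vc_alg_queries d VC Es ordF w"
  define u where "u i = (0::nat)" for i :: nat
  define Z where "Z i = (if 2*i+1 \<in> VC then ZB else ZA)" for i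
  define v where "v i = (if 2*i+1 \<in> VC then 2*i+1 else 2*i+2)" for i :: nat
  define W where "W i = (if 2*i+1 \<in> VC then AB else BB)" for i
  let ?g = "\<lambda>w. (\<Sum>i<n. 1 + indicator (Z i) (w (u i)) + (-1) * indicator (W i) (w (v i)) :: real)"
  have VCs: "VC \<subseteq> ?A w" for w
    unfolding vc_alg_queries_def by (rule fold_sup)
  have cond: "\<forall>i\<in>{..<n}. u i \<in> V \<and> v i \<in> V \<and> Z i \<in> sets borel \<and> W i \<in> sets borel"
    using sets by (auto simp: u_def v_def Z_def W_def V_def)
  have pt: "?g w \<le> sum c (?A w)" for w
  proof -
    have "1 + indicator (Z i) (w (u i)) + (-1) * indicator (W i) (w (v i)) \<le> real (card (?A w \<inter> {2*i+1, 2*i+2}))"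
      if i: "i < n" for i
    proof -
      have one: "1 \<le> card (?A w \<inter> {2*i+1, 2*i+2})"
      proof -
        obtain x where "x \<in> ?A w \<inter> {2*i+1, 2*i+2}" using cover i VCs[of w] by blast
        thus ?thesis by (metis card_0_eq empty_iff finite.emptyI finite_Int finite.insertI less_one not_le)
      qed
      show ?thesis
      proof (cases "w (u i) \<in> Z i \<and> w (v i) \<notin> W i")
        case True
        have "{2*i+1, 2*i+2} \<subseteq> ?A w"
        proof (cases "2*i+1 \<in> VC")
          case T: True
          thus ?thesis using True bB[OF i T] VCs[of w] by (auto simp: u_def v_def Z_def W_def)
        next
          case F: False
          hence "2*i+2 \<in> VC" using cover i by auto
          thus ?thesis using F True bA[OF i F] VCs[of w] by (auto simp: u_def v_def Z_def W_def)
        qed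
        hence "?A w \<inter> {2*i+1, 2*i+2} = {2*i+1, 2*i+2}" by auto
        hence "card (?A w \<inter> {2*i+1, 2*i+2}) = 2" by simp
        thus ?thesis by (simp split: split_indicator)
      next
        case False
        hence "1 + indicator (Z i) (w (u i)) + (-1) * indicator (W i) (w (v i)) \<le> (1::real)"
          by (auto split: split_indicator)
        thus ?thesis using one by linarith
      qed
    qed
    hence "?g w \<le> (\<Sum>i<n. real (card (?A w \<inter> {2*i+1, 2*i+2})))" by (intro sum_mono) auto
    also have "\<dots> \<le> sum c (?A w)" by (rule alg_count[OF alg_sub[OF valid]])
    finally show ?thesis .
  qed
  have "(\<integral>w. ?g w \<partial>M) \<le> (\<integral>w. sum c (?A w) \<partial>M)"
    by (rule integral_mono[OF sum_int[OF _ cond] alg_int[OF valid]]) (use pt in auto)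
  moreover have "(\<integral>w. ?g w \<partial>M) = (\<Sum>i<n. 1 + measure (d (u i)) (Z i) + (-1) * measure (d (v i)) (W i))"
    by (rule sum_integral[OF _ cond]) simp
  moreover have "(\<Sum>i<n. 1 + measure (d (u i)) (Z i) + (-1) * measure (d (v i)) (W i)) =
     (\<Sum>i<n. if 2*i+1 \<in> VC then 1 + measure (d 0) ZB - measure (d (2*i+1)) AB
                 else 1 + measure (d 0) ZA - measure (d (2*i+2)) BB)"
    by (intro sum.cong) (auto simp: u_def v_def Z_def W_def)
  ultimately show ?thesis unfolding expected_alg_def by simp
qed

lemma opt_upper_int:
  assumes pt: "\<And>w. \<forall>v\<in>V. w v \<in> Sv v \<Longrightarrow>
        OPT V E c d w \<le> cz + (\<Sum>i<n. 1 + indicator BB (w (2*i+2)) + 1 * indicator AA (w (2*i+1)))"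
    and sets: "AA \<in> sets borel" "BB \<in> sets borel"
  shows "expected_OPT V E c d \<le> cz + (\<Sum>i<n. 1 + measure (d (2*i+2)) BB + 1 * measure (d (2*i+1)) AA)"
proof -
  interpret P: prob_space M by (rule probM)
  let ?g = "\<lambda>w. (\<Sum>i<n. 1 + indicator BB (w (2*i+2)) + 1 * indicator AA (w (2*i+1)) :: real)"
  have cond: "\<forall>i\<in>{..<n}. 2*i+2 \<in> V \<and> 2*i+1 \<in> V \<and> BB \<in> sets borel \<and> AA \<in> sets borel"
    using sets by (auto simp: V_def)
  have gi: "integrable M ?g" by (rule sum_int[OF _ cond]) simp
  have "(\<integral>w. OPT V E c d w \<partial>M) \<le> (\<integral>w. cz + ?g w \<partial>M)"
  proof (rule integral_mono_AE[OF OPT_int])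
    show "integrable M (\<lambda>w. cz + ?g w)" using gi by (intro Bochner_Integration.integrable_add P.integrable_const)
    show "AE w in M. OPT V E c d w \<le> cz + ?g w" using AE_typ by eventually_elim (rule pt)
  qed
  also have "(\<integral>w. cz + ?g w \<partial>M) = cz + (\<integral>w. ?g w \<partial>M)"
    using gi by (subst Bochner_Integration.integral_add) (auto simp: P.prob_space)
  also have "(\<integral>w. ?g w \<partial>M) = (\<Sum>i<n. 1 + measure (d (2*i+2)) BB + 1 * measure (d (2*i+1)) AA)"
    by (rule sum_integral[OF _ cond]) simp
  finally show ?thesis unfolding expected_OPT_def .
qed

end

definition HE :: "nat \<Rightarrow> nat set set" where "HE n = (\<lambda>i. {2*i+1, 2*i+2, 0}) ` {..<n}"
definition GE :: "nat \<Rightarrow> nat set set" where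
  "GE n = (\<Union>i<n. {{0, 2*i+1}, {0, 2*i+2}, {2*i+1, 2*i+2}})"

context Inst begin

lemma res_iff: "resolved d Q w F \<longleftrightarrow>
    (\<exists>v\<in>F. \<forall>u\<in>F. u \<noteq> v \<longrightarrow> (if v\<in>Q then w v else hi d v) \<le> (if u\<in>Q then w u else lo d u))"
  using resolved_iff[of F d Q w] ne by blast

lemma hv_badB:
  assumes "1 < w 0" "w 0 < 11" "1 < w (2*i+1)" "w (2*i+1) < 11" "2*i+2 \<notin> Q"
  shows "\<not> resolved d Q w {2*i+1, 2*i+2, 0}"
  using assms unfolding res_iff by (auto simp: lo_d hi_d)

lemma hv_badA:
  assumes "0 < w 0" "w 0 < 10" "0 < w (2*i+2)" "2*i+1 \<notin> Q"
  shows "\<not> resolved d Q w {2*i+1, 2*i+2, 0}"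
  using assms unfolding res_iff by (auto simp: lo_d hi_d)

lemma hv_bad0:
  assumes "0 < w 0" "1 \<notin> Q" "2 \<notin> Q"
  shows "\<not> resolved d Q w {1, 2, 0}"
  using assms unfolding res_iff by (auto simp: lo_d hi_d)

lemma gv_badB:
  assumes "1 < w 0" "w 0 < 11" "2*i+2 \<notin> Q"
  shows "\<not> resolved d Q w {0, 2*i+2}"
  using assms unfolding res_iff by (auto simp: lo_d hi_d)

lemma gv_badA:
  assumes "0 < w 0" "w 0 < 10" "2*i+1 \<notin> Q"
  shows "\<not> resolved d Q w {0, 2*i+1}"
  using assms unfolding res_iff by (auto simp: lo_d hi_d)

lemma gv_bad0:
  assumes "1 \<notin> Q" "2 \<notin> Q"
  shows "\<not> resolved d Q w {1, 2}"
  using assms unfolding res_iff by (auto simp: lo_d hi_d)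

lemma typ_facts:
  assumes ty: "\<forall>v\<in>V. w v \<in> Sv v" and i: "i < n"
  shows "(1/2 < w 0 \<and> w 0 < 1) \<or> (10 < w 0 \<and> w 0 < 21/2)"
    "(0 < w (2*i+1) \<and> w (2*i+1) < \<alpha>) \<or> (\<beta> < w (2*i+1) \<and> w (2*i+1) < 10)"
    "(1 < w (2*i+2) \<and> w (2*i+2) < 1+\<delta>) \<or> (10 < w (2*i+2) \<and> w (2*i+2) < 11)"
proof -
  have "0 \<in> V" "2*i+1 \<in> V" "2*i+2 \<in> V" using i by (auto simp: V_def)
  hence "w 0 \<in> Sv 0" "w (2*i+1) \<in> Sv (2*i+1)" "w (2*i+2) \<in> Sv (2*i+2)" using ty by auto
  thus "(1/2 < w 0 \<and> w 0 < 1) \<or> (10 < w 0 \<and> w 0 < 21/2)"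
    "(0 < w (2*i+1) \<and> w (2*i+1) < \<alpha>) \<or> (\<beta> < w (2*i+1) \<and> w (2*i+1) < 10)"
    "(1 < w (2*i+2) \<and> w (2*i+2) < 1+\<delta>) \<or> (10 < w (2*i+2) \<and> w (2*i+2) < 11)"
    by (auto simp: Sv_def)
qed

lemma hv_feas:
  assumes E: "E = HE n" and ty: "\<forall>v\<in>V. w v \<in> Sv v"
  shows "feasible E d (Qs (\<lambda>i. w 0 < 5 \<or> w (2*i+2) \<in> {..<10}) (\<lambda>i. \<not> w 0 < 5 \<or> w (2*i+1) \<in> {})) w"
  unfolding feasible_def E HE_def
proof (intro ballI, elim imageE)
  fix F i assume F: "F = {2*i+1, 2*i+2, 0}" and i: "i \<in> {..<n}"
  let ?Q = "Qs (\<lambda>i. w 0 < 5 \<or> w (2*i+2) \<in> {..<10}) (\<lambda>i. \<not> w 0 < 5 \<or> w (2*i+1) \<in> {})"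
  have i': "i < n" using i by simp
  note t = typ_facts[OF ty i']
  have qa: "2*i+1 \<in> ?Q \<longleftrightarrow> w 0 < 5 \<or> w (2*i+2) < 10" using Qs_a[OF i'] by simp
  have qb: "2*i+2 \<in> ?Q \<longleftrightarrow> \<not> w 0 < 5" using Qs_b[OF i'] by simp
  have q0: "0 \<in> ?Q" by (rule Qs_0)
  show "resolved d ?Q w F"
  proof (cases "w 0 < 5")
    case True
    hence a: "2*i+1 \<in> ?Q" and z: "w 0 < 1" "1/2 < w 0" using qa t(1) by auto
    show ?thesis unfolding F res_iff
    proof (cases "w (2*i+1) \<le> w 0")
      case True
      show "\<exists>v\<in>{2*i+1, 2*i+2, 0}. \<forall>u\<in>{2*i+1, 2*i+2, 0}. u \<noteq> v \<longrightarrow> (if v \<in> ?Q then w v else hi d v) \<le> (if u \<in> ?Q then w u else lo d u)"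
        using True a q0 z t(3) by (intro bexI[of _ "2*i+1"]) (auto simp: lo_d hi_d)
    next
      case False
      show "\<exists>v\<in>{2*i+1, 2*i+2, 0}. \<forall>u\<in>{2*i+1, 2*i+2, 0}. u \<noteq> v \<longrightarrow> (if v \<in> ?Q then w v else hi d v) \<le> (if u \<in> ?Q then w u else lo d u)"
        using False a q0 z t(3) by (intro bexI[of _ 0]) (auto simp: lo_d hi_d)
    qed
  next
    case False
    hence b: "2*i+2 \<in> ?Q" and z: "10 < w 0" using qb t(1) by auto
    show ?thesis
    proof (cases "2*i+1 \<in> ?Q")
      case True
      thus ?thesis unfolding F using b q0 by (intro resolved_all) auto
    next
      case a: False
      hence wb: "10 \<le> w (2*i+2)" using qa False by auto
      show ?thesis unfolding F res_iff
        using a b q0 z wb by (intro bexI[of _ "2*i+1"]) (auto simp: lo_d hi_d)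
    qed
  qed
qed

lemma gv_feas:
  assumes E: "E = GE n" and ty: "\<forall>v\<in>V. w v \<in> Sv v" and a1: "\<alpha> = 1"
  shows "feasible E d (Qs (\<lambda>i. w 0 < 5 \<or> w (2*i+2) \<in> {..<10}) (\<lambda>i. \<not> w 0 < 5 \<or> w (2*i+1) \<in> {1<..})) w"
  unfolding feasible_def E GE_def
proof (intro ballI, elim UN_E)
  fix F i assume F: "F \<in> {{0, 2*i+1}, {0, 2*i+2}, {2*i+1, 2*i+2}}" and i: "i \<in> {..<n}"
  let ?Q = "Qs (\<lambda>i. w 0 < 5 \<or> w (2*i+2) \<in> {..<10}) (\<lambda>i. \<not> w 0 < 5 \<or> w (2*i+1) \<in> {1<..})"
  have i': "i < n" using i by simp
  note t = typ_facts[OF ty i']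
  have qa: "2*i+1 \<in> ?Q \<longleftrightarrow> w 0 < 5 \<or> w (2*i+2) < 10" using Qs_a[OF i'] by simp
  have qb: "2*i+2 \<in> ?Q \<longleftrightarrow> \<not> w 0 < 5 \<or> 1 < w (2*i+1)" using Qs_b[OF i'] by simp
  have q0: "0 \<in> ?Q" by (rule Qs_0)
  show "resolved d ?Q w F"
  proof (cases "w 0 < 5")
    case True
    hence a: "2*i+1 \<in> ?Q" and z: "w 0 < 1" "1/2 < w 0" using qa t(1) by auto
    show ?thesis
    proof (cases "2*i+2 \<in> ?Q")
      case True
      thus ?thesis using F a q0 by (intro resolved_all) auto
    next
      case b: False
      hence wa: "w (2*i+1) \<le> 1" using qb by auto
      consider "F = {0, 2*i+1}" | "F = {0, 2*i+2}" | "F = {2*i+1, 2*i+2}" using F by blast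
      thus ?thesis
      proof cases
        case 1 thus ?thesis using a q0 by (intro resolved_all) auto
      next
        case 2 show ?thesis unfolding 2 res_iff
          using b q0 z by (intro bexI[of _ 0]) (auto simp: lo_d hi_d)
      next
        case 3 show ?thesis unfolding 3 res_iff
          using a b wa by (intro bexI[of _ "2*i+1"]) (auto simp: lo_d hi_d)
      qed
    qed
  next
    case False
    hence b: "2*i+2 \<in> ?Q" and z: "10 < w 0" using qb t(1) by auto
    show ?thesis
    proof (cases "2*i+1 \<in> ?Q")
      case True
      thus ?thesis using F b q0 by (intro resolved_all) auto
    next
      case a: False
      hence wb: "10 \<le> w (2*i+2)" using qa False by auto
      consider "F = {0, 2*i+1}" | "F = {0, 2*i+2}" | "F = {2*i+1, 2*i+2}" using F by blast
      thus ?thesis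
      proof cases
        case 1 show ?thesis unfolding 1 res_iff
          using a q0 z by (intro bexI[of _ "2*i+1"]) (auto simp: lo_d hi_d)
      next
        case 2 thus ?thesis using b q0 by (intro resolved_all) auto
      next
        case 3 show ?thesis unfolding 3 res_iff
          using a b wb by (intro bexI[of _ "2*i+1"]) (auto simp: lo_d hi_d)
      qed
    qed
  qed
qed

lemma opt_pt:
  assumes "feasible E d (Qs (\<lambda>i. P \<or> w (2*i+2) \<in> BB) (\<lambda>i. \<not> P \<or> w (2*i+1) \<in> AA)) w"
  shows "OPT V E c d w \<le> cz + (\<Sum>i<n. 1 + indicator BB (w (2*i+2)) + 1 * indicator AA (w (2*i+1)))"
proof -
  have "OPT V E c d w \<le> sum c (Qs (\<lambda>i. P \<or> w (2*i+2) \<in> BB) (\<lambda>i. \<not> P \<or> w (2*i+1) \<in> AA))"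
    by (rule OPT_le[OF finV Qs_V assms])
  also have "\<dots> = cz + (\<Sum>i<n. of_bool (P \<or> w (2*i+2) \<in> BB) + of_bool (\<not> P \<or> w (2*i+1) \<in> AA))"
    by (rule Qs_cost)
  also have "\<dots> \<le> cz + (\<Sum>i<n. 1 + indicator BB (w (2*i+2)) + 1 * indicator AA (w (2*i+1)))"
    by (intro add_left_mono sum_mono) (auto split: split_indicator)
  finally show ?thesis .
qed

lemma opt_ge1:
  assumes "\<And>Q. Q \<subseteq> V \<Longrightarrow> feasible E d Q w \<Longrightarrow> 1 \<in> Q \<or> 2 \<in> Q"
  shows "1 \<le> OPT V E c d w"
proof (rule OPT_ge[OF finV order_refl feasV])
  fix Q assume Q: "Q \<subseteq> V" "feasible E d Q w"
  have nn: "\<forall>v. 0 \<le> c v" using cz by (simp add: c_def)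
  have fQ: "finite Q" using Q(1) finV by (rule finite_subset)
  obtain x where x: "x \<in> Q" "x \<in> {1,2}" using assms[OF Q] by blast
  have "c x \<le> sum c Q" using fQ x nn by (intro member_le_sum) auto
  moreover have "c x = 1" using x by (auto simp: c_def)
  ultimately show "1 \<le> sum c Q" by simp
qed

lemma EOPT_ge1:
  assumes "\<And>w Q. 0 < w 0 \<Longrightarrow> Q \<subseteq> V \<Longrightarrow> feasible E d Q w \<Longrightarrow> 1 \<in> Q \<or> 2 \<in> Q"
  shows "1 \<le> expected_OPT V E c d"
proof -
  interpret P: prob_space M by (rule probM)
  have "AE w in M. 0 < w 0"
    using AE_typ
  proof eventually_elim
    fix w assume "\<forall>v\<in>V. w v \<in> Sv v"
    hence "w 0 \<in> Sv 0" by (simp add: V_def)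
    thus "0 < w 0" by (auto simp: Sv_def)
  qed
  hence "AE w in M. 1 \<le> OPT V E c d w"
    by eventually_elim (rule opt_ge1, rule assms)
  hence "(\<integral>w. 1 \<partial>M) \<le> (\<integral>w. OPT V E c d w \<partial>M)"
    by (intro integral_mono_AE OPT_int P.integrable_const)
  thus ?thesis by (simp add: expected_OPT_def P.prob_space)
qed

lemma alg_in:
  assumes valid: "vc_alg_valid V E d VC Es ordF" and F: "F \<in> E" "x \<in> F"
    and nr: "\<And>Q. x \<notin> Q \<Longrightarrow> \<not> resolved d Q w F"
  shows "x \<in> vc_alg_queries d VC Es ordF w"
proof -
  have h2: "set Es = E" and h3: "\<forall>F\<in>E. set (ordF F) = F"
    using valid by (auto simp: vc_alg_valid_def)
  obtain Q' where Q': "Q' \<subseteq> foldl (\<lambda>Q F. scan (\<lambda>Q'. resolved d Q' w F) (ordF F) Q) VC Es"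
    "resolved d Q' w F \<or> set (ordF F) \<subseteq> Q'"
    using fold_prop[of F Es "\<lambda>F Q'. resolved d Q' w F" ordF VC] F h2 by auto
  have "x \<in> Q'"
  proof (rule ccontr)
    assume "x \<notin> Q'"
    thus False using nr[of Q'] Q'(2) h3 F by auto
  qed
  thus ?thesis using Q'(1) unfolding vc_alg_queries_def by blast
qed

lemma mz1: "measure (d 0) {1<..<11} = 1/2"
proof -
  have "({1/2<..<1} \<union> {10<..<21/2}) \<inter> {1<..<11} = {10<..<21/2::real}" by auto
  thus ?thesis using U2loc.meas[OF UZ, of "{1<..<11}"] by (simp add: d_def)
qed

lemma mz2: "measure (d 0) {0<..<10} = 1/2"
proof -
  have "({1/2<..<1} \<union> {10<..<21/2}) \<inter> {0<..<10} = {1/2<..<1::real}" by auto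
  thus ?thesis using U2loc.meas[OF UZ, of "{0<..<10}"] by (simp add: d_def)
qed

lemma mb1: "measure (d (2*i+2)) {..0} = 0"
proof -
  have "({1<..<1+\<delta>} \<union> {10<..<11}) \<inter> {..0} = ({}::real set)" by auto
  thus ?thesis using U2loc.meas[OF UB, of "{..0}"] by (simp add: d_def)
qed

lemma mb2: "measure (d (2*i+2)) {..<10} = \<delta> / (1+\<delta>)"
proof -
  have "({1<..<1+\<delta>} \<union> {10<..<11}) \<inter> {..<10} = {1<..<1+\<delta>}" using d1 by auto
  thus ?thesis using U2loc.meas[OF UB, of "{..<10}"] d0 by (simp add: d_def add.commute)
qed

lemma maH: "\<beta> = 1 \<Longrightarrow> measure (d (2*i+1)) (- {1<..<11}) = \<alpha> / (\<alpha> + 9)"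
proof -
  assume b: "\<beta> = 1"
  have "({0<..<\<alpha>} \<union> {\<beta><..<10}) \<inter> - {1<..<11} = {0<..<\<alpha>}" using b ab by auto
  moreover have "d (2*i+1) = U2 0 \<alpha> \<beta> 10" by (simp add: d_def)
  ultimately have "measure (d (2*i+1)) (- {1<..<11}) = \<alpha> / (\<alpha> + (10 - \<beta>))"
    using U2loc.meas[OF UA, of "- {1<..<11}"] a0 by simp
  thus ?thesis using b by simp
qed

lemma maG: "\<alpha> = 1 \<Longrightarrow> measure (d (2*i+1)) {1<..} = (10 - \<beta>) / (11 - \<beta>)"
proof -
  assume a: "\<alpha> = 1"
  have "({0<..<\<alpha>} \<union> {\<beta><..<10}) \<inter> {1<..} = {\<beta><..<10}" using a ab by auto
  moreover have "d (2*i+1) = U2 0 \<alpha> \<beta> 10" by (simp add: d_def)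
  ultimately have "measure (d (2*i+1)) {1<..} = (10 - \<beta>) / (\<alpha> + (10 - \<beta>))"
    using U2loc.meas[OF UA, of "{1<..}"] b10 by simp
  thus ?thesis using a by (simp add: algebra_simps)
qed

lemma cover_gen:
  assumes valid: "vc_alg_valid V E d VC Es ordF" and F: "F \<in> E" "2*i+1 \<in> F" "2*i+2 \<in> F"
  shows "2*i+1 \<in> VC \<or> 2*i+2 \<in> VC"
proof -
  have "vc_edge E d (2*i+1) (2*i+2)"
    unfolding vc_edge_def
  proof (intro conjI bexI[OF _ F(1)])
    have "(5::real) \<in> ival d (2*i+1) \<inter> ival d (2*i+2)" by (simp add: ival_def lo_d hi_d)
    thus "ival d (2*i+1) \<inter> ival d (2*i+2) \<noteq> {}" by blast
    show "\<forall>x\<in>F. lo d (2*i+1) \<le> lo d x" by (simp add: lo_d)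
  qed (use F in auto)
  hence "vc_graph_edge E d (2*i+1) (2*i+2)" by (simp add: vc_graph_edge_def)
  thus ?thesis using valid by (auto simp: vc_alg_valid_def is_vertex_cover_def)
qed

lemma sum_const_n: "(\<Sum>i<n. (k::real)) = real n * k" by simp

lemma HV_main:
  assumes E: "E = HE n" and b1: "\<beta> = 1"
  shows "expected_OPT V E c d \<le> cz + real n * (1 + \<delta>/(1+\<delta>))"
    "1 \<le> expected_OPT V E c d"
    "vc_alg_valid V E d VC Es ordF \<Longrightarrow> real n * (3/2 - \<alpha>/(\<alpha>+9)) \<le> expected_alg V c d VC Es ordF"
proof -
  have Fi: "{2*i+1, 2*i+2, 0} \<in> E" if "i < n" for i using that by (auto simp: E HE_def)
  have "expected_OPT V E c d \<le> cz + (\<Sum>i<n. 1 + measure (d (2*i+2)) {..<10} + 1 * measure (d (2*i+1)) {})"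
  proof (rule opt_upper_int)
    fix w assume ty: "\<forall>v\<in>V. w v \<in> Sv v"
    show "OPT V E c d w \<le> cz + (\<Sum>i<n. 1 + indicator {..<10} (w (2*i+2)) + 1 * indicator {} (w (2*i+1)))"
      by (rule opt_pt[where P="w 0 < 5"], rule hv_feas[OF E ty])
  qed auto
  also have "\<dots> = cz + real n * (1 + \<delta>/(1+\<delta>))" by (simp add: mb2[simplified])
  finally show "expected_OPT V E c d \<le> cz + real n * (1 + \<delta>/(1+\<delta>))" .
  show "1 \<le> expected_OPT V E c d"
  proof (rule EOPT_ge1)
    fix w Q assume w0: "0 < w 0" and Q: "Q \<subseteq> V" "feasible E d Q w"
    have "{1, 2, 0} \<in> E" using Fi[of 0] n1 by (simp add: numeral_2_eq_2)
    hence "resolved d Q w {1,2,0}" using Q(2) by (simp add: feasible_def)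
    thus "1 \<in> Q \<or> 2 \<in> Q" using hv_bad0[of w Q] w0 by blast
  qed
  assume valid: "vc_alg_valid V E d VC Es ordF"
  have "(\<Sum>i<n. if 2*i+1 \<in> VC then 1 + measure (d 0) {1<..<11} - measure (d (2*i+1)) (-{1<..<11})
                 else 1 + measure (d 0) {0<..<10} - measure (d (2*i+2)) {..0}) \<le> expected_alg V c d VC Es ordF"
  proof (rule alg_lower_int[OF valid])
    show "\<forall>i<n. 2*i+1 \<in> VC \<or> 2*i+2 \<in> VC" using cover_gen[OF valid Fi] by auto
    fix i w assume i: "i < n"
    show "2*i+2 \<in> vc_alg_queries d VC Es ordF w"
      if "2*i+1 \<in> VC" "w 0 \<in> {1<..<11}" "w (2*i+1) \<notin> - {1<..<11}"
      using that by (intro alg_in[OF valid Fi[OF i]] hv_badB) auto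
    show "2*i+1 \<in> vc_alg_queries d VC Es ordF w"
      if "2*i+1 \<notin> VC" "w 0 \<in> {0<..<10}" "w (2*i+2) \<notin> {..0}"
      using that by (intro alg_in[OF valid Fi[OF i]] hv_badA) auto
  qed auto
  moreover have "real n * (3/2 - \<alpha>/(\<alpha>+9)) \<le> (\<Sum>i<n. if 2*i+1 \<in> VC then 1 + measure (d 0) {1<..<11} - measure (d (2*i+1)) (-{1<..<11})
                 else 1 + measure (d 0) {0<..<10} - measure (d (2*i+2)) {..0})"
  proof -
    have "(\<Sum>i<n. (3/2 - \<alpha>/(\<alpha>+9))) \<le> (\<Sum>i<n. if 2*i+1 \<in> VC then 1 + measure (d 0) {1<..<11} - measure (d (2*i+1)) (-{1<..<11})
                 else 1 + measure (d 0) {0<..<10} - measure (d (2*i+2)) {..0})"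
      using a0 by (intro sum_mono) (auto simp: mz1 mz2 mb1[simplified] maH[OF b1, simplified])
    thus ?thesis by simp
  qed
  ultimately show "real n * (3/2 - \<alpha>/(\<alpha>+9)) \<le> expected_alg V c d VC Es ordF" by linarith
qed

lemma GV_main:
  assumes E: "E = GE n" and a1: "\<alpha> = 1"
  shows "expected_OPT V E c d \<le> cz + real n * (1 + \<delta>/(1+\<delta>) + (10 - \<beta>)/(11 - \<beta>))"
    "1 \<le> expected_OPT V E c d"
    "vc_alg_valid V E d VC Es ordF \<Longrightarrow> real n * (3/2) \<le> expected_alg V c d VC Es ordF"
proof -
  have Fa: "{0, 2*i+1} \<in> E" and Fb: "{0, 2*i+2} \<in> E" and Fab: "{2*i+1, 2*i+2} \<in> E" if "i < n" for i
    using that by (auto simp: E GE_def)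
  have "expected_OPT V E c d \<le> cz + (\<Sum>i<n. 1 + measure (d (2*i+2)) {..<10} + 1 * measure (d (2*i+1)) {1<..})"
  proof (rule opt_upper_int)
    fix w assume ty: "\<forall>v\<in>V. w v \<in> Sv v"
    show "OPT V E c d w \<le> cz + (\<Sum>i<n. 1 + indicator {..<10} (w (2*i+2)) + 1 * indicator {1<..} (w (2*i+1)))"
      by (rule opt_pt[where P="w 0 < 5"], rule gv_feas[OF E ty a1])
  qed auto
  also have "\<dots> = cz + real n * (1 + \<delta>/(1+\<delta>) + (10 - \<beta>)/(11 - \<beta>))" by (simp add: mb2[simplified] maG[OF a1, simplified])
  finally show "expected_OPT V E c d \<le> cz + real n * (1 + \<delta>/(1+\<delta>) + (10 - \<beta>)/(11 - \<beta>))" .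
  show "1 \<le> expected_OPT V E c d"
  proof (rule EOPT_ge1)
    fix w Q assume w0: "0 < w 0" and Q: "Q \<subseteq> V" "feasible E d Q w"
    have "{1, 2} \<in> E" using Fab[of 0] n1 by (simp add: numeral_2_eq_2)
    hence "resolved d Q w {1,2}" using Q(2) by (simp add: feasible_def)
    thus "1 \<in> Q \<or> 2 \<in> Q" using gv_bad0 by blast
  qed
  assume valid: "vc_alg_valid V E d VC Es ordF"
  have "(\<Sum>i<n. if 2*i+1 \<in> VC then 1 + measure (d 0) {1<..<11} - measure (d (2*i+1)) {}
                 else 1 + measure (d 0) {0<..<10} - measure (d (2*i+2)) {}) \<le> expected_alg V c d VC Es ordF"
  proof (rule alg_lower_int[OF valid])
    show "\<forall>i<n. 2*i+1 \<in> VC \<or> 2*i+2 \<in> VC" using cover_gen[OF valid Fab] by auto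
    fix i w assume i: "i < n"
    show "2*i+2 \<in> vc_alg_queries d VC Es ordF w"
      if "2*i+1 \<in> VC" "w 0 \<in> {1<..<11}" "w (2*i+1) \<notin> {}"
      using that by (intro alg_in[OF valid Fb[OF i]] gv_badB) auto
    show "2*i+1 \<in> vc_alg_queries d VC Es ordF w"
      if "2*i+1 \<notin> VC" "w 0 \<in> {0<..<10}" "w (2*i+2) \<notin> {}"
      using that by (intro alg_in[OF valid Fa[OF i]] gv_badA) auto
  qed auto
  moreover have "(\<Sum>i<n. if 2*i+1 \<in> VC then 1 + measure (d 0) {1<..<11} - measure (d (2*i+1)) {}
                 else 1 + measure (d 0) {0<..<10} - measure (d (2*i+2)) {}) = (\<Sum>i<n. (3/2::real))"
    by (rule sum.cong) (auto simp: mz1 mz2)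
  moreover have "(\<Sum>i<n. (3/2::real)) = real n * (3/2)" by simp
  ultimately show "real n * (3/2) \<le> expected_alg V c d VC Es ordF" by linarith
qed

end

context Inst begin

lemma lbi:
  assumes "1 \<le> expected_OPT V E c d" "expected_OPT V E c d \<le> U"
    and "\<And>VC Es ordF. vc_alg_valid V E d VC Es ordF \<Longrightarrow> L \<le> expected_alg V c d VC Es ordF"
    and "(3/2 - \<eta>) * U \<le> L"
  shows "lower_bound_instance \<eta> V E c d"
  unfolding lower_bound_instance_def
proof (intro conjI allI impI)
  show "valid_instance V E c d" by (rule valid)
  show "0 < expected_OPT V E c d" using assms(1) by simp
  fix VC Es ordF assume v: "vc_alg_valid V E d VC Es ordF"
  show "(3/2 - \<eta>) * expected_OPT V E c d \<le> expected_alg V c d VC Es ordF"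
  proof (cases "0 \<le> 3/2 - \<eta>")
    case True
    have "(3/2 - \<eta>) * expected_OPT V E c d \<le> (3/2 - \<eta>) * U" using assms(2) True by (rule mult_left_mono)
    thus ?thesis using assms(3)[OF v] assms(4) by linarith
  next
    case False
    have "(3/2 - \<eta>) * expected_OPT V E c d \<le> 0" using False assms(1) by (simp add: mult_nonpos_nonneg)
    moreover have "0 \<le> expected_alg V c d VC Es ordF" unfolding expected_alg_def
    proof (rule Bochner_Integration.integral_nonneg)
      fix w show "0 \<le> sum c (vc_alg_queries d VC Es ordF w)" by (rule sum_nonneg) (simp add: c_def cz)
    qed
    ultimately show ?thesis by linarith
  qed
qed

lemma hv_edge:
  assumes E: "E = HE n" and e: "vc_edge E d a b"
  shows "odd a \<and> even b"
proof -
  obtain F where F: "F \<in> E" "b \<in> F" "a \<in> F" "\<forall>x\<in>F. lo d a \<le> lo d x" and ab: "b \<noteq> a"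
    using e unfolding vc_edge_def by blast
  obtain i where i: "F = {2*i+1, 2*i+2, 0}" using F(1) by (auto simp: E HE_def)
  have "lo d a \<le> lo d (2*i+1)" using F(4) i by auto
  hence "lo d a \<le> 0" by (simp add: lo_d)
  hence oa: "odd a" "a \<noteq> 0" by (auto simp: lo_d split: if_splits)
  hence "a = 2*i+1" using F(3) i by auto
  hence "b = 2*i+2 \<or> b = 0" using F(2) ab i by auto
  thus ?thesis using oa by auto
qed

lemma hv_bip:
  assumes E: "E = HE n"
  shows "vc_bipartite V E d"
  unfolding vc_bipartite_def
proof (intro exI[of _ "{v\<in>V. odd v}"] conjI allI impI)
  show "{v\<in>V. odd v} \<subseteq> V" by auto
  fix u v assume "vc_graph_edge E d u v"
  hence e: "vc_edge E d u v \<or> vc_edge E d v u" by (simp add: vc_graph_edge_def)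
  have uv: "u \<in> V" "v \<in> V" using e EV unfolding vc_edge_def by blast+
  show "u \<in> {v\<in>V. odd v} \<longleftrightarrow> v \<notin> {v\<in>V. odd v}"
    using e hv_edge[OF E, of u v] hv_edge[OF E, of v u] uv by auto
qed

end

lemma HE_Ed: "\<forall>F\<in>HE n. F \<subseteq> {..2*n} \<and> 2 \<le> card F"
  by (auto simp: HE_def)

lemma GE_Ed: "\<forall>F\<in>GE n. F \<subseteq> {..2*n} \<and> 2 \<le> card F"
  by (auto simp: GE_def)

lemma GE_card: "\<forall>F\<in>GE n. card F = 2"
  by (auto simp: GE_def)

lemma GE_nonbip:
  assumes "1 \<le> n"
  shows "\<not> graph_bipartite V (GE n)"
proof
  assume "graph_bipartite V (GE n)"
  then obtain X where X: "\<forall>F\<in>GE n. card (F \<inter> X) = 1" unfolding graph_bipartite_def by blast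
  have "{0,1} \<in> GE n" "{0,2} \<in> GE n" "{1,2} \<in> GE n"
    using assms by (auto simp: GE_def numeral_2_eq_2 intro!: bexI[of _ 0])
  hence c: "card ({0,1} \<inter> X) = 1" "card ({0,2} \<inter> X) = 1" "card ({1,2} \<inter> X) = 1"
    using X by auto
  show False
    using c by (cases "(0::nat) \<in> X"; cases "(1::nat) \<in> X"; cases "(2::nat) \<in> X") auto
qed

lemma arith1:
  fixes \<eta> \<delta> x y :: real
  assumes "0 < \<eta>" "0 \<le> x" "x \<le> \<delta>" "0 \<le> y" "y \<le> \<delta>" "8*\<delta> \<le> \<eta>" "\<delta> \<le> 1/8"
  shows "(3/2 - \<eta>) * (0 + 1 * (1 + x)) \<le> 1 * (3/2 - y)"
proof (cases "\<eta> \<le> 3/2")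
  case True
  have "0 \<le> \<eta> * x" using assms by simp
  moreover have "(3/2 - \<eta>) * (0 + 1 * (1 + x)) = 3/2 + 3/2*x - \<eta> - \<eta>*x" by (simp add: algebra_simps)
  ultimately show ?thesis using assms by (simp only: mult_1 add_0)
next
  case False
  hence "(3/2 - \<eta>) * (1 + x) \<le> 0" using assms by (intro mult_nonpos_nonneg) auto
  thus ?thesis using assms by simp
qed

lemma arith2:
  fixes \<eta> \<delta> x y t cz :: real
  assumes "0 < \<eta>" "0 \<le> x" "x \<le> 2*\<delta>" "0 \<le> y" "y \<le> \<delta>" "8*\<delta> \<le> \<eta>" "\<delta> \<le> 1/8"
    "1 \<le> t" "3 \<le> \<eta> * t" "0 \<le> cz" "cz \<le> 1"
  shows "(3/2 - \<eta>) * (cz + t * (1 + x)) \<le> t * (3/2 - y)"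
proof (cases "\<eta> \<le> 3/2")
  case True
  have A: "(3/2 - \<eta>) * (cz + t * (1 + x)) = (3/2-\<eta>)*cz + (3/2)*t + (3/2)*(t*x) - \<eta>*t - \<eta>*(t*x)"
    by (simp add: algebra_simps)
  have B: "t * (3/2 - y) = 3/2*t - t*y" by (simp add: algebra_simps)
  have c1: "(3/2-\<eta>)*cz \<le> 3/2"
  proof -
    have "(3/2-\<eta>)*cz \<le> (3/2-\<eta>)" using mult_left_mono[of cz 1 "3/2-\<eta>"] assms True by simp
    thus ?thesis using assms by linarith
  qed
  have c2: "t*x \<le> 2*(t*\<delta>)"
  proof -
    have "t*x \<le> t*(2*\<delta>)" using assms by (intro mult_left_mono) auto
    thus ?thesis by simp
  qed
  have c3: "t*y \<le> t*\<delta>" using assms by (intro mult_left_mono) auto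
  have c4: "8*(t*\<delta>) \<le> \<eta>*t"
  proof -
    have "t*(8*\<delta>) \<le> t*\<eta>" using assms by (intro mult_left_mono) auto
    thus ?thesis by (simp add: ac_simps)
  qed
  have c5: "0 \<le> \<eta>*(t*x)" using assms by simp
  show ?thesis unfolding A B using c1 c2 c3 c4 c5 assms(9) by linarith
next
  case False
  hence "(3/2 - \<eta>) * (cz + t * (1 + x)) \<le> 0" using assms by (intro mult_nonpos_nonneg) auto
  moreover have "0 \<le> t * (3/2 - y)" using assms by simp
  ultimately show ?thesis by linarith
qed
theorem theorem2p5:
  fixes \<eta> :: real
  assumes "0 < \<eta>"
  shows "(\<exists>V E c d. lower_bound_instance \<eta> V E c d \<and> card E = 1)
       \<and> (\<exists>V E c d. lower_bound_instance \<eta> V E c d \<and> (\<forall>v\<in>V. c v = 1)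
                   \<and> vc_bipartite V E d)
       \<and> (\<exists>V E c d. lower_bound_instance \<eta> V E c d \<and> (\<forall>v\<in>V. c v = 1)
                   \<and> (\<forall>F\<in>E. card F = 2) \<and> \<not> graph_bipartite V E)"
proof -
  define \<delta> where "\<delta> = min \<eta> 1 / 8"
  define N where "N = nat \<lceil>3/\<eta>\<rceil> + 1"
  have d0: "0 < \<delta>" using assms by (simp add: \<delta>_def)
  have d1: "\<delta> \<le> 1/8" by (simp add: \<delta>_def)
  have d2: "\<delta> \<le> 1/2" using d1 by simp
  have de: "8*\<delta> \<le> \<eta>" by (simp add: \<delta>_def)
  have N1: "1 \<le> N" by (simp add: N_def)
  have NN: "3 \<le> \<eta> * real N"
  proof -
    have "3/\<eta> \<le> real (nat \<lceil>3/\<eta>\<rceil>)" by linarith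
    hence "3/\<eta> \<le> real N" by (simp add: N_def)
    thus ?thesis using assms by (simp add: field_simps)
  qed
  have x1: "\<delta>/(1+\<delta>) \<le> \<delta>"
  proof -
    have "\<delta>/(1+\<delta>) \<le> \<delta>/1" using d0 by (intro divide_left_mono) auto
    thus ?thesis by simp
  qed
  have x0: "0 \<le> \<delta>/(1+\<delta>)" using d0 by simp
  have y1: "\<delta>/(\<delta>+9) \<le> \<delta>"
  proof -
    have "\<delta>/(\<delta>+9) \<le> \<delta>/1" using d0 by (intro divide_left_mono) auto
    thus ?thesis by simp
  qed
  have y0: "0 \<le> \<delta>/(\<delta>+9)" using d0 by simp
  have P1: "\<exists>V E c d. lower_bound_instance \<eta> V E c d \<and> card E = 1"
  proof -
    interpret I: Inst 1 \<delta> 0 \<delta> 1 "HE 1"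
      using d0 d2 HE_Ed[of 1] by unfold_locales auto
    have "lower_bound_instance \<eta> I.V (HE 1) I.c I.d"
    proof (rule I.lbi)
      show "1 \<le> expected_OPT I.V (HE 1) I.c I.d" by (rule I.HV_main(2)) simp_all
      show "expected_OPT I.V (HE 1) I.c I.d \<le> 0 + real 1 * (1 + \<delta>/(1+\<delta>))" by (rule I.HV_main(1)) simp_all
      show "real 1 * (3/2 - \<delta>/(\<delta>+9)) \<le> expected_alg I.V I.c I.d VC Es ordF"
        if "vc_alg_valid I.V (HE 1) I.d VC Es ordF" for VC Es ordF
        using I.HV_main(3)[OF refl refl that] by simp
      show "(3/2 - \<eta>) * (0 + real 1 * (1 + \<delta>/(1+\<delta>))) \<le> real 1 * (3/2 - \<delta>/(\<delta>+9))"
        using arith1[OF assms x0 x1 y0 y1 de d1] by simp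
    qed
    moreover have "HE 1 = {{1,2,0}}" by (simp add: HE_def lessThan_Suc numeral_2_eq_2)
    hence "card (HE 1) = 1" by simp
    ultimately show ?thesis by blast
  qed
  have P2: "\<exists>V E c d. lower_bound_instance \<eta> V E c d \<and> (\<forall>v\<in>V. c v = 1) \<and> vc_bipartite V E d"
  proof -
    interpret I: Inst N \<delta> 1 \<delta> 1 "HE N"
      using d0 d2 HE_Ed[of N] N1 by unfold_locales auto
    have "lower_bound_instance \<eta> I.V (HE N) I.c I.d"
    proof (rule I.lbi)
      show "1 \<le> expected_OPT I.V (HE N) I.c I.d" by (rule I.HV_main(2)) simp_all
      show "expected_OPT I.V (HE N) I.c I.d \<le> 1 + real N * (1 + \<delta>/(1+\<delta>))" by (rule I.HV_main(1)) simp_all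
      show "real N * (3/2 - \<delta>/(\<delta>+9)) \<le> expected_alg I.V I.c I.d VC Es ordF"
        if "vc_alg_valid I.V (HE N) I.d VC Es ordF" for VC Es ordF
        using I.HV_main(3)[OF refl refl that] by simp
      have "2*\<delta> \<ge> \<delta>/(1+\<delta>)" using x1 d0 by simp
      moreover have "1 \<le> real N" using N1 by simp
      ultimately show "(3/2 - \<eta>) * (1 + real N * (1 + \<delta>/(1+\<delta>))) \<le> real N * (3/2 - \<delta>/(\<delta>+9))"
        using arith2[OF assms x0 _ y0 y1 de d1 _ NN, of 1] by simp
    qed
    moreover have "\<forall>v\<in>I.V. I.c v = 1" by (simp add: I.c_def)
    moreover have "vc_bipartite I.V (HE N) I.d" by (rule I.hv_bip) simp
    ultimately show ?thesis by blast
  qed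
  have P3: "\<exists>V E c d. lower_bound_instance \<eta> V E c d \<and> (\<forall>v\<in>V. c v = 1)
                   \<and> (\<forall>F\<in>E. card F = 2) \<and> \<not> graph_bipartite V E"
  proof -
    interpret I: Inst N \<delta> 1 1 "10 - \<delta>" "GE N"
      using d0 d1 d2 GE_Ed[of N] N1 by unfold_locales auto
    have eq: "(10 - (10 - \<delta>)) / (11 - (10 - \<delta>)) = \<delta>/(1+\<delta>)" by (simp add: add.commute)
    have "lower_bound_instance \<eta> I.V (GE N) I.c I.d"
    proof (rule I.lbi)
      show "1 \<le> expected_OPT I.V (GE N) I.c I.d" by (rule I.GV_main(2)) simp_all
      have "expected_OPT I.V (GE N) I.c I.d \<le> 1 + real N * (1 + \<delta>/(1+\<delta>) + (10 - (10 - \<delta>)) / (11 - (10 - \<delta>)))"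
        by (rule I.GV_main(1)) simp_all
      thus "expected_OPT I.V (GE N) I.c I.d \<le> 1 + real N * (1 + 2*(\<delta>/(1+\<delta>)))" unfolding eq by (simp add: add.commute)
      show "real N * (3/2 - 0) \<le> expected_alg I.V I.c I.d VC Es ordF"
        if "vc_alg_valid I.V (GE N) I.d VC Es ordF" for VC Es ordF
        using I.GV_main(3)[OF refl refl that] by simp
      have "2*(\<delta>/(1+\<delta>)) \<le> 2*\<delta>" using x1 by simp
      moreover have "0 \<le> 2*(\<delta>/(1+\<delta>))" using x0 by simp
      moreover have "1 \<le> real N" using N1 by simp
      moreover have "(0::real) \<le> \<delta>" using d0 by simp
      ultimately show "(3/2 - \<eta>) * (1 + real N * (1 + 2*(\<delta>/(1+\<delta>)))) \<le> real N * (3/2 - 0)"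
        using arith2[OF assms _ _ _ _ de d1 _ NN, of "2*(\<delta>/(1+\<delta>))" 0 1] by simp
    qed
    moreover have "\<forall>v\<in>I.V. I.c v = 1" by (simp add: I.c_def)
    moreover have "\<forall>F\<in>GE N. card F = 2" by (rule GE_card)
    moreover have "\<not> graph_bipartite I.V (GE N)" using N1 by (rule GE_nonbip)
    ultimately show ?thesis by blast
  qed
  show ?thesis using P1 P2 P3 by blast
qed

end
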